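(* Let $K>0$ and let $G$ be a probability distribution on $\mathbb{R}$ such that there is a measure $\nu_1$ dominating $G$ with $\frac{dG}{d\nu_1}(x)\le C$ for all $x$, for some $C>0$. Let $X_1,X_2,\ldots$ be i.i.d. real random variables with cumulative distribution function $H_X$ and $Y_1,Y_2,\ldots$ i.i.d. with cumulative distribution function $H_Y$, the two sequences independent, and $\mathbb{D}_{n,m}=\{X_1,\ldots,X_n,Y_1,\ldots,Y_m\}$. Let $\mathrm{WIKS}(\mathbb{D}_{n,m})=\mathbb{E}_{\mathbb{D}_{n,m}}[d(P_1,P_2)]$, where $d$ is the Kolmogorov distance and $\mathbb{E}_{\mathbb{D}_{n,m}}$ is expectation under the posterior of $(P_1,P_2)$ given $\mathbb{D}_{n,m}$ when $P_1,P_2$ are a priori independent $DP(K,G)$. Then $$\mathrm{WIKS}(\mathbb{D}_{n,m})\xrightarrow[n,m\to\infty]{a.s.}\sup_{x\in\mathbb{R}}|H_X(x)-H_Y(x)|.$$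
   Context: $DP(K,G)$ denotes the Dirichlet process with concentration parameter $K$ and base distribution $G$. Under the model where, given $(P_1,P_2)$, the $X_i$ are i.i.d. $P_1$ and the $Y_j$ i.i.d. $P_2$, and $P_1,P_2$ are a priori independent $DP(K,G)$, the posterior makes $P_1,P_2$ independent with $P_1\sim DP\big(K+n,\frac{KG+\sum_{i}\delta_{X_i}}{K+n}\big)$ and $P_2\sim DP\big(K+m,\frac{KG+\sum_j\delta_{Y_j}}{K+m}\big)$. The Kolmogorov distance is $d(P,Q)=\sup_{t}|P((-\infty,t])-Q((-\infty,t])|$. The WIKS index with cumulative weight $W$ is $\mathbb{E}_{\mathbb{D}_{n,m}}[W(d(P_1,P_2))]$; here the uniform weight $W(\varepsilon)=\varepsilon$ on $[0,1]$ is used. *)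

theory Defs
  imports "HOL-Probability.Probability"
begin

definition beta1 :: "real \<Rightarrow> real measure" where
  "beta1 K = density lborel (\<lambda>v. ennreal (indicator {0<..<1} v * K * (1 - v) powr (K - 1)))"

definition sb_weight :: "(nat \<Rightarrow> real) \<Rightarrow> nat \<Rightarrow> real" where
  "sb_weight v i = v i * (\<Prod>j<i. 1 - v j)"

text \<open>The discrete random probability measure sum_i w_i delta_{theta_i}
  (with a dummy value off the full-probability set where it is not a probability measure).\<close>
definition sb_measure :: "(nat \<Rightarrow> real) \<Rightarrow> (nat \<Rightarrow> real) \<Rightarrow> real measure" where
  "sb_measure v \<theta> =
     (if (\<forall>i. 0 \<le> v i \<and> v i \<le> 1) \<and> sb_weight v sums 1
      then measure_of UNIV (sets borel) (\<lambda>A. \<Sum>i. ennreal (sb_weight v i * indicator A (\<theta> i)))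
      else return borel 0)"

text \<open>Dirichlet process DP(K,G), via Sethuraman's stick-breaking construction:
  the law of sum_i w_i delta_{theta_i}, V_i iid Beta(1,K), theta_i iid G, independent.\<close>
definition DP :: "real \<Rightarrow> real measure \<Rightarrow> real measure measure" where
  "DP K G = distr (PiM (UNIV :: nat set) (\<lambda>_. beta1 K) \<Otimes>\<^sub>M PiM (UNIV :: nat set) (\<lambda>_. G))
                  (prob_algebra borel) (\<lambda>(v, \<theta>). sb_measure v \<theta>)"

definition kolmogorov_dist :: "real measure \<Rightarrow> real measure \<Rightarrow> real" where
  "kolmogorov_dist P Q = (SUP t. \<bar>measure P {..t} - measure Q {..t}\<bar>)"

definition post_base :: "real \<Rightarrow> real measure \<Rightarrow> (nat \<Rightarrow> real) \<Rightarrow> nat \<Rightarrow> real measure" where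
  "post_base K G xs n = measure_of UNIV (sets borel)
     (\<lambda>A. ennreal ((K * measure G A + (\<Sum>i<n. indicator A (xs i))) / (K + real n)))"

text \<open>WIKS index with uniform weight W(eps) = eps: posterior expectation of d(P1,P2),
  where the posterior makes P1, P2 independent DP's.\<close>
definition WIKS :: "real \<Rightarrow> real measure \<Rightarrow> (nat \<Rightarrow> real) \<Rightarrow> (nat \<Rightarrow> real) \<Rightarrow> nat \<Rightarrow> nat \<Rightarrow> real" where
  "WIKS K G xs ys n m =
     (\<integral>PQ. kolmogorov_dist (fst PQ) (snd PQ)
        \<partial>(DP (K + real n) (post_base K G xs n) \<Otimes>\<^sub>M DP (K + real m) (post_base K G ys m)))"

end

theory Submission
  imports Defs
begin

lemma kd_bdd:
  assumes "prob_space P" "prob_space Q"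
  shows "bdd_above (range (\<lambda>t. \<bar>measure P {..t} - measure Q {..t}\<bar>))"
proof (rule bdd_aboveI[where M=1])
  fix x assume "x \<in> range (\<lambda>t. \<bar>measure P {..t} - measure Q {..t}\<bar>)"
  then obtain t where x: "x = \<bar>measure P {..t} - measure Q {..t}\<bar>" by auto
  have "measure P {..t} \<le> 1" "measure Q {..t} \<le> 1"
    using assms prob_space.prob_le_1 by auto
  then show "x \<le> 1" unfolding x using measure_nonneg[of P "{..t}"] measure_nonneg[of Q "{..t}"] unfolding abs_le_iff by linarith
qed

lemma kd_ge:
  assumes "prob_space P" "prob_space Q"
  shows "\<bar>measure P {..t} - measure Q {..t}\<bar> \<le> kolmogorov_dist P Q"
  unfolding kolmogorov_dist_def by (rule cSUP_upper[OF _ kd_bdd[OF assms]]) auto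

lemma kd_le:
  assumes "\<And>t. \<bar>measure P {..t} - measure Q {..t}\<bar> \<le> c"
  shows "kolmogorov_dist P Q \<le> c"
  unfolding kolmogorov_dist_def by (rule cSUP_least) (use assms in auto)

lemma kd_nonneg:
  assumes "prob_space P" "prob_space Q"
  shows "0 \<le> kolmogorov_dist P Q"
  using kd_ge[OF assms, of 0] by linarith

lemma kd_le1:
  assumes "prob_space P" "prob_space Q"
  shows "kolmogorov_dist P Q \<le> 1"
proof (rule kd_le)
  fix t
  have "measure P {..t} \<le> 1" "measure Q {..t} \<le> 1"
    using assms prob_space.prob_le_1 by auto
  then show "\<bar>measure P {..t} - measure Q {..t}\<bar> \<le> 1" using measure_nonneg[of P "{..t}"] measure_nonneg[of Q "{..t}"] unfolding abs_le_iff by linarith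
qed

lemma kd_sym: "kolmogorov_dist P Q = kolmogorov_dist Q P"
  unfolding kolmogorov_dist_def by (simp add: abs_minus_commute)

lemma kd_lip:
  assumes "prob_space P" "prob_space Q" "prob_space P'" "prob_space Q'"
  shows "\<bar>kolmogorov_dist P Q - kolmogorov_dist P' Q'\<bar> \<le> kolmogorov_dist P P' + kolmogorov_dist Q Q'"
proof -
  have a: "kolmogorov_dist P Q \<le> kolmogorov_dist P P' + kolmogorov_dist P' Q' + kolmogorov_dist Q Q'"
  proof (rule kd_le)
    fix t
    have "\<bar>measure P {..t} - measure P' {..t}\<bar> \<le> kolmogorov_dist P P'"
         "\<bar>measure P' {..t} - measure Q' {..t}\<bar> \<le> kolmogorov_dist P' Q'"
         "\<bar>measure Q {..t} - measure Q' {..t}\<bar> \<le> kolmogorov_dist Q Q'"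
      using assms by (auto intro!: kd_ge)
    then show "\<bar>measure P {..t} - measure Q {..t}\<bar> \<le> kolmogorov_dist P P' + kolmogorov_dist P' Q' + kolmogorov_dist Q Q'"
      by linarith
  qed
  have b: "kolmogorov_dist P' Q' \<le> kolmogorov_dist P P' + kolmogorov_dist P Q + kolmogorov_dist Q Q'"
  proof (rule kd_le)
    fix t
    have "\<bar>measure P {..t} - measure P' {..t}\<bar> \<le> kolmogorov_dist P P'"
         "\<bar>measure P {..t} - measure Q {..t}\<bar> \<le> kolmogorov_dist P Q"
         "\<bar>measure Q {..t} - measure Q' {..t}\<bar> \<le> kolmogorov_dist Q Q'"
      using assms by (auto intro!: kd_ge)
    then show "\<bar>measure P' {..t} - measure Q' {..t}\<bar> \<le> kolmogorov_dist P P' + kolmogorov_dist P Q + kolmogorov_dist Q Q'"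
      by linarith
  qed
  from a b show ?thesis by linarith
qed

lemma kd_rat:
  assumes P: "real_distribution P" and Q: "real_distribution Q"
  shows "kolmogorov_dist P Q = (SUP q\<in>\<rat>. \<bar>measure P {..q} - measure Q {..q}\<bar>)"
proof -
  interpret P: real_distribution P by fact
  interpret Q: real_distribution Q by fact
  have pp: "prob_space P" "prob_space Q" by unfold_locales
  let ?g = "\<lambda>s. \<bar>measure P {..s} - measure Q {..s}\<bar>"
  have bdd: "bdd_above (?g ` \<rat>)"
    using kd_bdd[OF pp] by (rule bdd_above_mono) auto
  have ne: "\<rat> \<noteq> {}" using Rats_0 by blast
  define S where "S = (SUP q\<in>\<rat>. ?g q)"
  have "?g t \<le> S" for t
  proof (rule ccontr)
    assume "\<not> ?g t \<le> S"
    then have lt: "S < ?g t" by simp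
    have cont: "continuous (at_right t) ?g"
      using P.cdf_is_right_cont[of t] Q.cdf_is_right_cont[of t] unfolding cdf_def
      by (intro continuous_intros)
    then have "(?g \<longlongrightarrow> ?g t) (at_right t)"
      by (simp add: continuous_within)
    then have "eventually (\<lambda>s. S < ?g s) (at_right t)"
      using lt by (rule order_tendstoD)
    then obtain b where b: "b > t" "\<And>s. t < s \<Longrightarrow> s < b \<Longrightarrow> S < ?g s"
      unfolding eventually_at_right_field by blast
    obtain r where r: "r \<in> \<rat>" "t < r" "r < b" using Rats_dense_in_real[OF b(1)] by blast
    have "?g r \<le> S" unfolding S_def by (rule cSUP_upper[OF r(1) bdd])
    with b(2)[OF r(2,3)] show False by simp
  qed
  then have "kolmogorov_dist P Q \<le> S" by (rule kd_le)
  moreover have "S \<le> kolmogorov_dist P Q"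
    unfolding S_def by (rule cSUP_least[OF ne]) (rule kd_ge[OF pp])
  ultimately show ?thesis unfolding S_def by simp
qed

lemma kd_measurable_pair:
  "(\<lambda>PQ. kolmogorov_dist (fst PQ) (snd PQ)) \<in> borel_measurable (prob_algebra borel \<Otimes>\<^sub>M prob_algebra borel)"
proof -
  have "(\<lambda>PQ. SUP q\<in>\<rat>. \<bar>measure (fst PQ) {..q::real} - measure (snd PQ) {..q}\<bar>)
        \<in> borel_measurable (prob_algebra borel \<Otimes>\<^sub>M prob_algebra borel)"
    apply (rule borel_measurable_cSUP)
       apply (rule countable_rat)
      apply (rule borel_measurable_abs)
      apply (rule borel_measurable_diff)
       apply (rule measurable_compose[OF measurable_fst measurable_measure_prob_algebra])
       apply (rule atMost_borel)
      apply (rule measurable_compose[OF measurable_snd measurable_measure_prob_algebra])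
      apply (rule atMost_borel)
    subgoal for x
      using kd_bdd[of "fst x" "snd x"]
      by (auto simp: space_pair_measure space_prob_algebra intro: bdd_above_mono)
    done
  then show ?thesis
  proof (rule measurable_cong[THEN iffD1, rotated])
    fix x :: "real measure \<times> real measure"
    assume "x \<in> space (prob_algebra borel \<Otimes>\<^sub>M prob_algebra borel)"
    then have "real_distribution (fst x)" "real_distribution (snd x)"
      by (auto simp: space_pair_measure space_prob_algebra real_distribution_def real_distribution_axioms_def)
    then show "(SUP q\<in>\<rat>. \<bar>measure (fst x) {..q} - measure (snd x) {..q}\<bar>) = kolmogorov_dist (fst x) (snd x)"
      by (simp add: kd_rat)
  qed
qed

lemma kd_measurable_left:
  assumes R: "real_distribution R"
  shows "(\<lambda>P. kolmogorov_dist P R) \<in> borel_measurable (prob_algebra borel)"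
proof -
  have "R \<in> space (prob_algebra borel)"
    using R by (auto simp: space_prob_algebra real_distribution_def real_distribution_axioms_def)
  then have "(\<lambda>P. (P, R)) \<in> prob_algebra borel \<rightarrow>\<^sub>M prob_algebra borel \<Otimes>\<^sub>M prob_algebra borel"
    by measurable
  from measurable_comp[OF this kd_measurable_pair] show ?thesis by (simp add: comp_def)
qed

lemma post_base_emeasure_aux:
  fixes K :: real
  assumes K: "K > 0" and G: "prob_space G"
  shows "ennreal ((K * measure G A + (\<Sum>i<n. indicator A (xs i))) / (K + real n))
       = ennreal (K/(K+n)) * emeasure G A + (\<Sum>i<n. ennreal (1/(K+n)) * indicator A (xs i))"
proof -
  have pos: "K + real n > 0" using K by simp
  have e1: "(K * measure G A + (\<Sum>i<n. indicator A (xs i))) / (K + real n)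
        = K/(K+n) * measure G A + (\<Sum>i<n. 1/(K+n) * indicator A (xs i))"
    by (simp add: add_divide_distrib sum_divide_distrib)
  have e2: "ennreal (K/(K+n) * measure G A) = ennreal (K/(K+n)) * emeasure G A"
    using K pos by (simp add: ennreal_mult[symmetric] finite_measure.emeasure_eq_measure[OF prob_space.finite_measure[OF G]])
  have c: "0 \<le> 1/(K+real n)" using pos by simp
  have e3: "ennreal (\<Sum>i<n. 1/(K+n) * indicator A (xs i)) = (\<Sum>i<n. ennreal (1/(K+n) * indicator A (xs i)))"
    by (rule sum_ennreal[symmetric]) (use pos in auto)
  have e4: "(\<Sum>i<n. ennreal (1/(K+n) * indicator A (xs i))) = (\<Sum>i<n. ennreal (1/(K+n)) * indicator A (xs i))"
    by (rule sum.cong[OF refl]) (simp only: ennreal_mult[OF c indicator_pos_le] ennreal_indicator)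
  have n1: "0 \<le> K/(K+n) * measure G A" using K pos by simp
  have n2: "0 \<le> (\<Sum>i<n. 1/(K+n) * indicator A (xs i))" using pos by (intro sum_nonneg) auto
  show ?thesis
    unfolding e1 ennreal_plus[OF n1 n2] e2 e3 e4 ..
qed

lemma post_base_emeasure:
  fixes K :: real
  assumes K: "K > 0" and G: "prob_space G" "sets G = sets borel" and A: "A \<in> sets borel"
  shows "emeasure (post_base K G xs n) A = ennreal ((K * measure G A + (\<Sum>i<n. indicator A (xs i))) / (K + real n))"
proof -
  let ?\<mu> = "\<lambda>A. ennreal ((K * measure G A + (\<Sum>i<n. indicator A (xs i))) / (K + real n))"
  have eq: "?\<mu> A = ennreal (K/(K+n)) * emeasure G A + (\<Sum>i<n. ennreal (1/(K+n)) * indicator A (xs i))" for A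
    by (rule post_base_emeasure_aux[OF K G(1)])
  have sa: "sigma_algebra UNIV (sets borel)"
    using sets.sigma_algebra_axioms[of borel] by simp
  have pos: "positive (sets borel) ?\<mu>" unfolding positive_def by simp
  have ca: "countably_additive (sets borel) ?\<mu>"
    unfolding countably_additive_def
  proof (intro allI impI)
    fix F :: "nat \<Rightarrow> real set"
    assume F: "range F \<subseteq> sets borel" "disjoint_family F" "\<Union> (range F) \<in> sets borel"
    have "(\<Sum>i. ?\<mu> (F i)) = (\<Sum>i. ennreal (K/(K+n)) * emeasure G (F i) + (\<Sum>j<n. ennreal (1/(K+n)) * indicator (F i) (xs j)))"
      unfolding eq ..
    also have "\<dots> = (\<Sum>i. ennreal (K/(K+n)) * emeasure G (F i)) + (\<Sum>i. (\<Sum>j<n. ennreal (1/(K+n)) * indicator (F i) (xs j)))"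
      by (rule suminf_add[symmetric]) auto
    also have "(\<Sum>i. ennreal (K/(K+n)) * emeasure G (F i)) = ennreal (K/(K+n)) * emeasure G (\<Union>i. F i)"
      using F G by (simp add: suminf_emeasure)
    also have "(\<Sum>i. (\<Sum>j<n. ennreal (1/(K+n)) * indicator (F i) (xs j))) = (\<Sum>j<n. (\<Sum>i. ennreal (1/(K+n)) * indicator (F i) (xs j)))"
      by (rule suminf_sum) auto
    also have "\<dots> = (\<Sum>j<n. ennreal (1/(K+n)) * indicator (\<Union>i. F i) (xs j))"
      using F by (simp add: suminf_indicator)
    finally show "(\<Sum>i. ?\<mu> (F i)) = ?\<mu> (\<Union> (range F))"
      unfolding eq by simp
  qed
  show ?thesis unfolding post_base_def
    by (rule emeasure_measure_of_sigma[OF sa pos ca A])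
qed

lemma sets_post_base[simp]: "sets (post_base K G xs n) = sets borel"
  unfolding post_base_def using sets.sigma_sets_eq[of borel] by simp

lemma space_post_base[simp]: "space (post_base K G xs n) = UNIV"
  unfolding post_base_def by simp

lemma post_base_real_distribution:
  fixes K :: real
  assumes K: "K > 0" and G: "prob_space G" "sets G = sets borel"
  shows "real_distribution (post_base K G xs n)"
proof -
  have "emeasure (post_base K G xs n) UNIV = ennreal ((K * measure G UNIV + (\<Sum>i<n. indicator UNIV (xs i))) / (K + real n))"
    by (rule post_base_emeasure[OF K G]) simp
  also have "measure G UNIV = 1"
    using G prob_space.prob_space sets_eq_imp_space_eq[of G borel] by fastforce
  finally have "emeasure (post_base K G xs n) (space (post_base K G xs n)) = 1"
    using K by simp
  then have "prob_space (post_base K G xs n)" by (rule prob_spaceI)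
  then show ?thesis
    by (simp add: real_distribution_def real_distribution_axioms_def)
qed

lemma post_base_measure:
  fixes K :: real
  assumes K: "K > 0" and G: "prob_space G" "sets G = sets borel" and A: "A \<in> sets borel"
  shows "measure (post_base K G xs n) A = (K * measure G A + (\<Sum>i<n. indicator A (xs i))) / (K + real n)"
  unfolding measure_def post_base_emeasure[OF assms]
  using K by (intro enn2real_ennreal divide_nonneg_pos add_nonneg_nonneg sum_nonneg) auto

lemma beta_has_integral:
  fixes a :: real and p :: nat
  assumes a: "a > 0"
  shows "((\<lambda>v. a * (1 - v) powr (a - 1 + p)) has_integral (a / (a + p))) {0<..<1}"
proof -
  define F where "F v = - (a / (a + p)) * (1 - v) powr (a + p)" for v :: real
  have ap: "a + real p > 0" using a by simp
  have "((\<lambda>v. a * (1 - v) powr (a - 1 + p)) has_integral (F 1 - F 0)) {0..1}"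
  proof (rule fundamental_theorem_of_calculus_interior)
    show "continuous_on {0..1} F"
      unfolding F_def using ap
      by (intro continuous_intros continuous_on_powr') auto
    fix x :: real assume x: "x \<in> {0<..<1}"
    have "(F has_real_derivative (- (a / (a + p)) * ((a + p) * (1 - x) powr (a + p - 1) * (- 1)))) (at x)"
      unfolding F_def using x
      by (auto intro!: derivative_eq_intros)
    moreover have "- (a / (a + p)) * ((a + p) * (1 - x) powr (a + p - 1) * (- 1)) = a * (1 - x) powr (a - 1 + p)"
      using ap by (simp add: field_simps)
    ultimately show "(F has_vector_derivative a * (1 - x) powr (a - 1 + p)) (at x)"
      by (simp add: has_real_derivative_iff_has_vector_derivative)
  qed simp
  moreover have "F 1 - F 0 = a / (a + p)"
    unfolding F_def using ap by simp
  ultimately show ?thesis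
    by (simp add: has_integral_Icc_iff_Ioo)
qed

definition beta_dens :: "real \<Rightarrow> real \<Rightarrow> real" where
  "beta_dens a v = indicator {0<..<1} v * a * (1 - v) powr (a - 1)"

lemma beta1_alt: "beta1 a = density lborel (\<lambda>v. ennreal (beta_dens a v))"
  unfolding beta1_def beta_dens_def ..

lemma beta_dens_measurable[measurable]: "beta_dens a \<in> borel_measurable borel"
  unfolding beta_dens_def by measurable

lemma beta_nn_moment:
  fixes a :: real and p :: nat
  assumes a: "a > 0"
  shows "(\<integral>\<^sup>+ v. ennreal (beta_dens a v) * ennreal ((1 - v) ^ p) \<partial>lborel) = ennreal (a / (a + p))"
proof -
  have "(\<integral>\<^sup>+ v. ennreal (beta_dens a v) * ennreal ((1 - v) ^ p) \<partial>lborel)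
      = (\<integral>\<^sup>+ v. ennreal (a * (1 - v) powr (a - 1 + p)) * indicator {0<..<1} v \<partial>lborel)"
  proof (rule nn_integral_cong)
    fix v :: real
    show "ennreal (beta_dens a v) * ennreal ((1 - v) ^ p) = ennreal (a * (1 - v) powr (a - 1 + p)) * indicator {0<..<1} v"
    proof (cases "v \<in> {0<..<1}")
      case True
      then have "(1 - v) powr (a - 1 + p) = (1 - v) powr (a - 1) * (1 - v) ^ p"
        by (simp add: powr_add powr_realpow)
      then show ?thesis using True a
        by (simp add: beta_dens_def ennreal_mult[symmetric] mult.assoc)
    next
      case False
      then show ?thesis by (simp add: beta_dens_def)
    qed
  qed
  also have "\<dots> = ennreal (a / (a + p))"
    by (rule nn_integral_has_integral_lebesgue'[OF _ beta_has_integral[OF a]]) (use a in auto)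
  finally show ?thesis .
qed

lemma sets_beta1[simp, measurable_cong]: "sets (beta1 a) = sets borel"
  unfolding beta1_def by simp

lemma space_beta1[simp]: "space (beta1 a) = UNIV"
  unfolding beta1_def by simp

lemma beta1_nn_moment:
  fixes a :: real and p :: nat
  assumes a: "a > 0"
  shows "(\<integral>\<^sup>+ v. ennreal ((1 - v) ^ p) \<partial>beta1 a) = ennreal (a / (a + p))"
  unfolding beta1_alt
  by (subst nn_integral_density) (auto simp: beta_nn_moment[OF a])

lemma prob_space_beta1:
  assumes a: "a > 0"
  shows "prob_space (beta1 a)"
proof (rule prob_spaceI)
  have "emeasure (beta1 a) (space (beta1 a)) = (\<integral>\<^sup>+ v. ennreal (beta_dens a v) * indicator UNIV v \<partial>lborel)"
    unfolding beta1_alt by (subst emeasure_density) auto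
  also have "\<dots> = (\<integral>\<^sup>+ v. ennreal (beta_dens a v) * ennreal ((1 - v) ^ 0) \<partial>lborel)"
    by simp
  also have "\<dots> = 1" using beta_nn_moment[OF a, of 0] a by simp
  finally show "emeasure (beta1 a) (space (beta1 a)) = 1" .
qed

lemma AE_beta1: "AE v in beta1 a. 0 < v \<and> v < 1"
  unfolding beta1_alt
  by (subst AE_density) (auto simp: beta_dens_def indicator_def intro!: AE_I2)

lemma beta1_moment:
  fixes a :: real and p :: nat
  assumes a: "a > 0"
  shows "(\<integral>v. (1 - v) ^ p \<partial>beta1 a) = a / (a + p)"
proof -
  have "(\<integral>v. (1 - v) ^ p \<partial>beta1 a) = enn2real (\<integral>\<^sup>+ v. ennreal ((1 - v) ^ p) \<partial>beta1 a)"
  proof (rule integral_eq_nn_integral)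
    show "AE x in beta1 a. 0 \<le> (1 - x) ^ p"
      using AE_beta1[of a] by (rule eventually_mono) auto
  qed measurable
  also have "\<dots> = a / (a + p)" using a by (simp add: beta1_nn_moment)
  finally show ?thesis .
qed

lemma beta1_integrable:
  assumes a: "a > 0" and f: "f \<in> borel_measurable borel" and b: "\<And>v. 0 < v \<Longrightarrow> v < 1 \<Longrightarrow> \<bar>f v\<bar> \<le> B"
  shows "integrable (beta1 a) (f :: real \<Rightarrow> real)"
proof -
  interpret prob_space "beta1 a" by (rule prob_space_beta1[OF a])
  show ?thesis
  proof (rule integrable_const_bound[where B=B])
    show "AE x in beta1 a. norm (f x) \<le> B"
      using AE_beta1[of a] by (rule eventually_mono) (use b in auto)
  qed (use f in measurable)
qed

lemma beta1_m1: "a > 0 \<Longrightarrow> (\<integral>v. 1 - v \<partial>beta1 a) = a / (a + 1)"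
  using beta1_moment[of a 1] by simp

lemma beta1_m2: "a > 0 \<Longrightarrow> (\<integral>v. (1 - v)^2 \<partial>beta1 a) = a / (a + 2)"
  using beta1_moment[of a 2] by simp

lemma beta1_v2: 
  assumes a: "a > 0"
  shows "(\<integral>v. v^2 \<partial>beta1 a) = 2 / ((a + 1) * (a + 2))"
proof -
  have i0: "integrable (beta1 a) (\<lambda>v. (1 - v)^2)" "integrable (beta1 a) (\<lambda>v. 1 - v)" "integrable (beta1 a) (\<lambda>v. 1::real)"
    by (auto intro!: beta1_integrable[OF a, where B=1] simp: abs_le_iff power_le_one)
  have "(\<integral>v. v^2 \<partial>beta1 a) = (\<integral>v. ((1 - v)^2 + (- 2) * (1 - v)) + 1 \<partial>beta1 a)"
    by (rule Bochner_Integration.integral_cong) (auto simp: power2_eq_square algebra_simps)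
  also have "\<dots> = (\<integral>v. (1 - v)^2 \<partial>beta1 a) + (- 2) * (\<integral>v. 1 - v \<partial>beta1 a) + (\<integral>v. 1 \<partial>beta1 a)"
    by (subst Bochner_Integration.integral_add[OF Bochner_Integration.integrable_add[OF i0(1) integrable_mult_right[OF i0(2)]] i0(3)],
        subst Bochner_Integration.integral_add[OF i0(1) integrable_mult_right[OF i0(2)]]) (simp only: integral_mult_right_zero)
  also have "\<dots> = a / (a + 2) - 2 * (a / (a + 1)) + 1"
    using a prob_space.prob_space[OF prob_space_beta1[OF a]] by (simp add: beta1_m1 beta1_m2)
  also have "\<dots> = 2 / ((a + 1) * (a + 2))"
  proof -
    have d: "a + 1 \<noteq> 0" "a + 2 \<noteq> 0" "a * a + (2 + a * 3) \<noteq> 0" using a by (auto, smt (verit) mult_pos_pos)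
    show ?thesis using d by (simp add: field_simps)
  qed
  finally show ?thesis .
qed

definition sb_good :: "(nat \<Rightarrow> real) \<Rightarrow> bool" where
  "sb_good v \<longleftrightarrow> (\<forall>i. 0 \<le> v i \<and> v i \<le> 1) \<and> sb_weight v sums 1"

lemma sb_weight_nonneg: "(\<forall>i. 0 \<le> v i \<and> v i \<le> 1) \<Longrightarrow> 0 \<le> sb_weight v i"
  unfolding sb_weight_def by (auto intro!: mult_nonneg_nonneg prod_nonneg)

lemma ennreal_suminf_swap:
  fixes g :: "nat \<Rightarrow> nat \<Rightarrow> ennreal"
  shows "(\<Sum>i. \<Sum>k. g i k) = (\<Sum>k. \<Sum>i. g i k)"
proof -
  have "(\<Sum>i. \<Sum>k. g i k) = (\<Sum>i. \<integral>\<^sup>+k. g i k \<partial>count_space UNIV)"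
    by (simp add: nn_integral_count_space_nat)
  also have "\<dots> = (\<integral>\<^sup>+k. (\<Sum>i. g i k) \<partial>count_space UNIV)"
    by (rule nn_integral_suminf[symmetric]) auto
  also have "\<dots> = (\<Sum>k. \<Sum>i. g i k)"
    by (simp add: nn_integral_count_space_nat)
  finally show ?thesis .
qed

lemma sb_emeasure_good:
  assumes g: "sb_good v" and A: "A \<in> sets borel"
  shows "emeasure (sb_measure v \<theta>) A = (\<Sum>i. ennreal (sb_weight v i * indicator A (\<theta> i)))"
proof -
  let ?\<mu> = "\<lambda>A. \<Sum>i. ennreal (sb_weight v i * indicator A (\<theta> i))"
  have v: "\<forall>i. 0 \<le> v i \<and> v i \<le> 1" using g by (simp add: sb_good_def)
  have eq: "?\<mu> A = (\<Sum>i. ennreal (sb_weight v i) * indicator A (\<theta> i))" for A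
    using sb_weight_nonneg[OF v] by (simp add: ennreal_mult ennreal_indicator)
  have sa: "sigma_algebra UNIV (sets borel)"
    using sets.sigma_algebra_axioms[of borel] by simp
  have pos: "positive (sets borel) ?\<mu>" unfolding positive_def by simp
  have ca: "countably_additive (sets borel) ?\<mu>"
    unfolding countably_additive_def
  proof (intro allI impI)
    fix F :: "nat \<Rightarrow> real set"
    assume F: "range F \<subseteq> sets borel" "disjoint_family F" "\<Union> (range F) \<in> sets borel"
    have "(\<Sum>i. ?\<mu> (F i)) = (\<Sum>i. \<Sum>k. ennreal (sb_weight v k) * indicator (F i) (\<theta> k))"
      unfolding eq ..
    also have "\<dots> = (\<Sum>k. \<Sum>i. ennreal (sb_weight v k) * indicator (F i) (\<theta> k))"
      by (rule ennreal_suminf_swap)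
    also have "\<dots> = (\<Sum>k. ennreal (sb_weight v k) * indicator (\<Union>i. F i) (\<theta> k))"
      using F by (simp add: suminf_indicator)
    finally show "(\<Sum>i. ?\<mu> (F i)) = ?\<mu> (\<Union> (range F))"
      unfolding eq by simp
  qed
  have "sb_measure v \<theta> = measure_of UNIV (sets borel) ?\<mu>"
    using g unfolding sb_measure_def sb_good_def by simp
  then show ?thesis
    using emeasure_measure_of_sigma[OF sa pos ca A] by simp
qed

lemma sets_sb_measure[simp, measurable_cong]: "sets (sb_measure v \<theta>) = sets borel"
  unfolding sb_measure_def using sets.sigma_sets_eq[of "borel :: real measure"] by simp

lemma space_sb_measure[simp]: "space (sb_measure v \<theta>) = UNIV"
  unfolding sb_measure_def by simp

lemma sb_prob: "prob_space (sb_measure v \<theta>)"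
proof (cases "sb_good v")
  case True
  have v: "\<forall>i. 0 \<le> v i \<and> v i \<le> 1" and s: "sb_weight v sums 1"
    using True by (auto simp: sb_good_def)
  show ?thesis
  proof (rule prob_spaceI)
    have "emeasure (sb_measure v \<theta>) (space (sb_measure v \<theta>)) = (\<Sum>i. ennreal (sb_weight v i))"
      using sb_emeasure_good[OF True, of UNIV \<theta>] by simp
    also have "\<dots> = ennreal (\<Sum>i. sb_weight v i)"
      using s sb_weight_nonneg[OF v] by (intro suminf_ennreal2) (auto simp: sums_iff)
    also have "\<dots> = 1" using s by (simp add: sums_iff)
    finally show "emeasure (sb_measure v \<theta>) (space (sb_measure v \<theta>)) = 1" .
  qed
next
  case False
  then have "sb_measure v \<theta> = return borel 0"
    unfolding sb_measure_def sb_good_def by auto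
  then show ?thesis by (simp add: prob_space_return)
qed

lemma sb_measure_good:
  assumes g: "sb_good v" and A: "A \<in> sets borel"
  shows "summable (\<lambda>i. sb_weight v i * indicator A (\<theta> i))"
    and "measure (sb_measure v \<theta>) A = (\<Sum>i. sb_weight v i * indicator A (\<theta> i))"
proof -
  have v: "\<forall>i. 0 \<le> v i \<and> v i \<le> 1" and s: "sb_weight v sums 1"
    using g by (auto simp: sb_good_def)
  have nn: "0 \<le> sb_weight v i * indicator A (\<theta> i)" for i
    using sb_weight_nonneg[OF v] by simp
  show sm: "summable (\<lambda>i. sb_weight v i * indicator A (\<theta> i))"
  proof (rule summable_comparison_test')
    show "summable (sb_weight v)" using s by (simp add: sums_iff)
    fix n show "norm (sb_weight v n * indicator A (\<theta> n)) \<le> sb_weight v n"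
      using sb_weight_nonneg[OF v] by (simp add: indicator_def)
  qed
  have "emeasure (sb_measure v \<theta>) A = ennreal (\<Sum>i. sb_weight v i * indicator A (\<theta> i))"
    unfolding sb_emeasure_good[OF g A] using nn sm by (rule suminf_ennreal2)
  then show "measure (sb_measure v \<theta>) A = (\<Sum>i. sb_weight v i * indicator A (\<theta> i))"
    unfolding measure_def using nn sm by (simp add: suminf_nonneg)
qed

lemma sb_measure_bad:
  assumes "\<not> sb_good v"
  shows "sb_measure v \<theta> = return borel 0"
  using assms unfolding sb_measure_def sb_good_def by auto

lemma sb_in_space: "sb_measure v \<theta> \<in> space (prob_algebra borel)"
  by (simp add: space_prob_algebra sb_prob)

lemma sb_good_measurable[measurable]:
  "Measurable.pred (PiM UNIV (\<lambda>_. borel :: real measure)) sb_good"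
  unfolding sb_good_def sums_def sb_weight_def by measurable

lemma sb_measurable_borel:
  "(\<lambda>x. sb_measure (fst x) (snd x)) \<in> (PiM UNIV (\<lambda>_. borel :: real measure) \<Otimes>\<^sub>M PiM UNIV (\<lambda>_. borel :: real measure)) \<rightarrow>\<^sub>M prob_algebra borel"
proof (rule measurable_prob_algebraI)
  show "prob_space (sb_measure (fst x) (snd x))" for x by (rule sb_prob)
  show "(\<lambda>x. sb_measure (fst x) (snd x)) \<in> (PiM UNIV (\<lambda>_. borel) \<Otimes>\<^sub>M PiM UNIV (\<lambda>_. borel)) \<rightarrow>\<^sub>M subprob_algebra borel"
  proof (rule measurable_subprob_algebra)
    fix x show "subprob_space (sb_measure (fst x) (snd x))"
      using sb_prob prob_space_imp_subprob_space by blast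
    show "sets (sb_measure (fst x) (snd x)) = sets borel" by simp
  next
    fix A :: "real set" assume A[measurable]: "A \<in> sets borel"
    have g[measurable]: "Measurable.pred (PiM UNIV (\<lambda>_. borel :: real measure) \<Otimes>\<^sub>M PiM UNIV (\<lambda>_. borel :: real measure)) (\<lambda>x. sb_good (fst x))"
      by measurable
    have "(\<lambda>x. if sb_good (fst x) then (\<Sum>i. ennreal (sb_weight (fst x) i * indicator A (snd x i))) else emeasure (return borel (0::real)) A)
       \<in> borel_measurable (PiM UNIV (\<lambda>_. borel :: real measure) \<Otimes>\<^sub>M PiM UNIV (\<lambda>_. borel :: real measure))"
      unfolding sb_weight_def by measurable
    then show "(\<lambda>x. emeasure (sb_measure (fst x) (snd x)) A) \<in> borel_measurable (PiM UNIV (\<lambda>_. borel) \<Otimes>\<^sub>M PiM UNIV (\<lambda>_. borel))"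
    proof (rule measurable_cong[THEN iffD1, rotated])
      fix x show "(if sb_good (fst x) then (\<Sum>i. ennreal (sb_weight (fst x) i * indicator A (snd x i))) else emeasure (return borel (0::real)) A)
         = emeasure (sb_measure (fst x) (snd x)) A"
        using sb_emeasure_good[OF _ A] sb_measure_bad by auto
    qed
  qed
qed

lemma sb_measurable:
  assumes "sets N1 = sets (borel :: real measure)" "sets N2 = sets (borel :: real measure)"
  shows "(\<lambda>x. sb_measure (fst x) (snd x)) \<in> (PiM UNIV (\<lambda>_. N1) \<Otimes>\<^sub>M PiM UNIV (\<lambda>_. N2)) \<rightarrow>\<^sub>M prob_algebra borel"
proof -
  have "sets (PiM UNIV (\<lambda>_. N1) \<Otimes>\<^sub>M PiM UNIV (\<lambda>_. N2)) = sets (PiM UNIV (\<lambda>_. borel :: real measure) \<Otimes>\<^sub>M PiM UNIV (\<lambda>_. borel :: real measure))"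
    by (intro sets_pair_measure_cong sets_PiM_cong) (auto simp: assms)
  note e = measurable_cong_sets[OF this refl, of "prob_algebra (borel :: real measure)"]
  show ?thesis unfolding e by (rule sb_measurable_borel)
qed

lemma PiM_UNIV_integral_prod:
  fixes f :: "nat \<Rightarrow> 'a \<Rightarrow> real"
  assumes M: "prob_space M" and J: "finite J" and int: "\<And>i. i \<in> J \<Longrightarrow> integrable M (f i)"
  shows "(\<integral>x. (\<Prod>i\<in>J. f i (x i)) \<partial>PiM UNIV (\<lambda>_. M)) = (\<Prod>i\<in>J. \<integral>y. f i y \<partial>M)"
proof -
  interpret P: product_prob_space "\<lambda>_::nat. M" UNIV
    using M by (simp add: product_prob_space_def product_sigma_finite_def product_prob_space_axioms_def prob_space_imp_sigma_finite)
  have fm[measurable]: "f i \<in> borel_measurable M" if "i \<in> J" for i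
    using int[OF that] by auto
  have d: "distr (PiM UNIV (\<lambda>_. M)) (PiM J (\<lambda>_. M)) (\<lambda>x. restrict x J) = PiM J (\<lambda>_. M)"
    by (rule P.distr_PiM_restrict_finite) (use J in auto)
  have m: "(\<lambda>y. \<Prod>i\<in>J. f i (y i)) \<in> borel_measurable (PiM J (\<lambda>_. M))"
  proof (rule borel_measurable_prod)
    fix i assume i: "i \<in> J"
    show "(\<lambda>y. f i (y i)) \<in> borel_measurable (PiM J (\<lambda>_. M))"
      using measurable_compose[OF measurable_component_singleton[OF i, of "\<lambda>_. M"] fm[OF i]] .
  qed
  have "(\<integral>y. (\<Prod>i\<in>J. f i (y i)) \<partial>PiM J (\<lambda>_. M)) = (\<integral>x. (\<Prod>i\<in>J. f i (restrict x J i)) \<partial>PiM UNIV (\<lambda>_. M))"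
    by (subst d[symmetric], rule integral_distr[OF measurable_restrict_subset m]) simp
  also have "\<dots> = (\<integral>x. (\<Prod>i\<in>J. f i (x i)) \<partial>PiM UNIV (\<lambda>_. M))"
    by (intro Bochner_Integration.integral_cong refl prod.cong) auto
  finally have "(\<integral>x. (\<Prod>i\<in>J. f i (x i)) \<partial>PiM UNIV (\<lambda>_. M)) = (\<integral>y. (\<Prod>i\<in>J. f i (y i)) \<partial>PiM J (\<lambda>_. M))" ..
  also have "\<dots> = (\<Prod>i\<in>J. \<integral>y. f i y \<partial>M)"
    by (rule P.product_integral_prod[OF J int])
  finally show ?thesis .
qed

lemma pair_integral_mult:
  fixes f :: "'a \<Rightarrow> real" and g :: "'b \<Rightarrow> real"
  assumes M1: "prob_space M1" and M2: "prob_space M2" and f: "integrable M1 f" and g: "integrable M2 g"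
  shows "integrable (M1 \<Otimes>\<^sub>M M2) (\<lambda>x. f (fst x) * g (snd x))"
    and "(\<integral>x. f (fst x) * g (snd x) \<partial>(M1 \<Otimes>\<^sub>M M2)) = (\<integral>x. f x \<partial>M1) * (\<integral>y. g y \<partial>M2)"
proof -
  interpret p: pair_prob_space M1 M2
    using M1 M2 by (simp add: pair_prob_space_def pair_sigma_finite_def prob_space_imp_sigma_finite)
  have [measurable]: "f \<in> borel_measurable M1" "g \<in> borel_measurable M2" using f g by auto
  show i: "integrable (M1 \<Otimes>\<^sub>M M2) (\<lambda>x. f (fst x) * g (snd x))"
  proof (rule p.Fubini_integrable)
    show "(\<lambda>x. f (fst x) * g (snd x)) \<in> borel_measurable (M1 \<Otimes>\<^sub>M M2)" by measurable
    have "integrable M1 (\<lambda>x. norm (f x) * (\<integral>y. norm (g y) \<partial>M2))"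
      using f by (intro integrable_mult_left integrable_norm)
    then show "integrable M1 (\<lambda>x. \<integral>y. norm (f (fst (x, y)) * g (snd (x, y))) \<partial>M2)"
      by (simp add: abs_mult)
    show "AE x in M1. integrable M2 (\<lambda>y. f (fst (x, y)) * g (snd (x, y)))"
      using g by (intro AE_I2) auto
  qed
  have "(\<integral>x. f (fst x) * g (snd x) \<partial>(M1 \<Otimes>\<^sub>M M2)) = (\<integral>x. (\<integral>y. f (fst (x, y)) * g (snd (x, y)) \<partial>M2) \<partial>M1)"
    using p.integral_fst'[OF i] by simp
  also have "\<dots> = (\<integral>x. f x * (\<integral>y. g y \<partial>M2) \<partial>M1)"
    by simp
  also have "\<dots> = (\<integral>x. f x \<partial>M1) * (\<integral>y. g y \<partial>M2)"
    by simp
  finally show "(\<integral>x. f (fst x) * g (snd x) \<partial>(M1 \<Otimes>\<^sub>M M2)) = (\<integral>x. f x \<partial>M1) * (\<integral>y. g y \<partial>M2)" .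
qed

lemma prob_CS:
  fixes X :: "'a \<Rightarrow> real"
  assumes M: "prob_space M" and i1: "integrable M X" and i2: "integrable M (\<lambda>x. (X x)\<^sup>2)"
  shows "(\<integral>x. \<bar>X x\<bar> \<partial>M) \<le> sqrt (\<integral>x. (X x)\<^sup>2 \<partial>M)"
proof -
  interpret prob_space M by fact
  have "0 \<le> variance (\<lambda>x. \<bar>X x\<bar>)" by (rule variance_positive)
  also have "variance (\<lambda>x. \<bar>X x\<bar>) = expectation (\<lambda>x. (\<bar>X x\<bar>)\<^sup>2) - (expectation (\<lambda>x. \<bar>X x\<bar>))\<^sup>2"
    by (rule variance_eq) (use i1 i2 in auto)
  finally have "(expectation (\<lambda>x. \<bar>X x\<bar>))\<^sup>2 \<le> expectation (\<lambda>x. (X x)\<^sup>2)" by simp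
  then show ?thesis
    using real_le_rsqrt by blast
qed

lemma sum_weights: "(\<Sum>i<N. sb_weight v i) = 1 - (\<Prod>j<N. 1 - v j)"
  by (induction N) (auto simp: sb_weight_def algebra_simps)

definition RN :: "nat \<Rightarrow> (nat \<Rightarrow> real) \<Rightarrow> real" where
  "RN N v = (\<Prod>j<N. 1 - v j)"

definition SN :: "real set \<Rightarrow> real \<Rightarrow> nat \<Rightarrow> (nat \<Rightarrow> real) \<times> (nat \<Rightarrow> real) \<Rightarrow> real" where
  "SN S p N \<omega> = (\<Sum>i<N. sb_weight (fst \<omega>) i * (indicator S (snd \<omega> i) - p))"

lemma sb_dev_bound:
  assumes g: "sb_good v" and S: "S \<in> sets borel" and p: "0 \<le> p" "p \<le> 1"
  shows "\<bar>measure (sb_measure v \<theta>) S - p\<bar> \<le> \<bar>SN S p N (v, \<theta>)\<bar> + RN N v"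
proof -
  define w where "w = sb_weight v"
  define c where "c i = w i * (indicator S (\<theta> i) - p)" for i
  have v: "\<forall>i. 0 \<le> v i \<and> v i \<le> 1" and sw: "w sums 1"
    using g by (auto simp: sb_good_def w_def)
  have w0: "0 \<le> w i" for i unfolding w_def by (rule sb_weight_nonneg[OF v])
  have smw: "summable w" using sw by (simp add: sums_iff)
  have sI: "summable (\<lambda>i. w i * indicator S (\<theta> i))"
    and meq: "measure (sb_measure v \<theta>) S = (\<Sum>i. w i * indicator S (\<theta> i))"
    using sb_measure_good[OF g S, of \<theta>] by (auto simp: w_def)
  have ceq: "c = (\<lambda>i. w i * indicator S (\<theta> i) - w i * p)"
    by (auto simp: c_def algebra_simps)
  have smc: "summable c" unfolding ceq
    by (intro summable_diff sI summable_mult2 smw)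
  have "suminf c = (\<Sum>i. w i * indicator S (\<theta> i)) - (\<Sum>i. w i * p)"
    unfolding ceq by (rule suminf_diff[OF sI summable_mult2[OF smw], symmetric])
  also have "(\<Sum>i. w i * p) = (\<Sum>i. w i) * p"
    by (rule suminf_mult2[OF smw, symmetric])
  also have "(\<Sum>i. w i) = 1" using sw by (simp add: sums_iff)
  finally have cm: "suminf c = measure (sb_measure v \<theta>) S - p" unfolding meq by simp
  have split: "suminf c = (\<Sum>n. c (n + N)) + (\<Sum>i<N. c i)"
    by (rule suminf_split_initial_segment[OF smc])
  have smcN: "summable (\<lambda>n. c (n + N))" using smc by (rule summable_ignore_initial_segment)
  have smwN: "summable (\<lambda>n. w (n + N))" using smw by (rule summable_ignore_initial_segment)
  have cb: "\<bar>c i\<bar> \<le> w i" for i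
  proof -
    have "\<bar>indicator S (\<theta> i) - p\<bar> \<le> 1" using p by (auto simp: indicator_def)
    then have "w i * \<bar>indicator S (\<theta> i) - p\<bar> \<le> w i * 1"
      by (rule mult_left_mono) (rule w0)
    then show ?thesis using w0[of i] by (simp add: c_def abs_mult)
  qed
  have t1: "(\<Sum>n. c (n + N)) \<le> (\<Sum>n. w (n + N))"
    by (rule suminf_le[OF _ smcN smwN]) (use cb in \<open>auto simp: abs_le_iff\<close>)
  have t2: "- (\<Sum>n. w (n + N)) \<le> (\<Sum>n. c (n + N))"
    unfolding suminf_minus[OF smwN, symmetric]
  proof (rule suminf_le[OF _ summable_minus[OF smwN] smcN])
    fix n show "- w (n + N) \<le> c (n + N)" using cb[of "n + N"] by (simp add: abs_le_iff)
  qed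
  have "(\<Sum>i. w i) = (\<Sum>n. w (n + N)) + (\<Sum>i<N. w i)"
    by (rule suminf_split_initial_segment[OF smw])
  then have tw: "(\<Sum>n. w (n + N)) = RN N v"
    using sw sum_weights[where N=N and v=v] by (simp add: sums_iff w_def RN_def)
  have "SN S p N (v, \<theta>) = (\<Sum>i<N. c i)" by (simp add: SN_def c_def w_def)
  then show ?thesis using cm split t1 t2 tw by linarith
qed

lemma RN_nonneg: "(\<forall>i. 0 \<le> v i \<and> v i \<le> 1) \<Longrightarrow> 0 \<le> RN N v"
  unfolding RN_def by (auto intro!: prod_nonneg)

lemma RN_Suc: "RN (Suc N) v = RN N v * (1 - v N)"
  unfolding RN_def by simp

lemma RN_le1: "(\<forall>i. 0 \<le> v i \<and> v i \<le> 1) \<Longrightarrow> RN N v \<le> 1"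
  unfolding RN_def by (auto intro!: prod_le_1)

lemma good_from_RN:
  assumes u: "\<forall>i. 0 \<le> v i \<and> v i \<le> 1" and r0: "(INF N. ennreal \<bar>RN N v\<bar>) = 0"
  shows "sb_good v"
proof -
  have nn: "0 \<le> RN N v" for N using RN_nonneg[OF u] .
  have dec: "decseq (\<lambda>N. RN N v)"
  proof (rule decseq_SucI)
    fix N have "RN N v * (1 - v N) \<le> RN N v * 1"
      using nn[of N] u by (intro mult_left_mono) auto
    then show "RN (Suc N) v \<le> RN N v" by (simp add: RN_Suc)
  qed
  have lim: "(\<lambda>N. RN N v) \<longlonglongrightarrow> 0"
  proof (rule LIMSEQ_I)
    fix r :: real assume r: "0 < r"
    have "(INF N. ennreal \<bar>RN N v\<bar>) < ennreal r" using r r0 by simp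
    then obtain N where "ennreal \<bar>RN N v\<bar> < ennreal r" by (auto simp: INF_less_iff)
    then have N: "RN N v < r" using nn[of N] by (simp add: ennreal_less_iff)
    show "\<exists>no. \<forall>n\<ge>no. norm (RN n v - 0) < r"
    proof (intro exI allI impI)
      fix n assume "N \<le> n"
      then have "RN n v \<le> RN N v" using dec by (simp add: decseq_def)
      then show "norm (RN n v - 0) < r" using N nn[of n] by simp
    qed
  qed
  have "(\<lambda>n. \<Sum>i<n. sb_weight v i) = (\<lambda>n. 1 - RN n v)"
    by (simp add: sum_weights RN_def)
  moreover have "(\<lambda>n. 1 - RN n v) \<longlonglongrightarrow> 1 - 0"
    by (intro tendsto_diff tendsto_const lim)
  ultimately have "sb_weight v sums 1" by (simp add: sums_def)
  then show ?thesis using u by (simp add: sb_good_def)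
qed

context
  fixes a :: real and F0 :: "real measure"
  assumes a: "a > 0" and F0: "real_distribution F0"
begin

lemma F0p: "prob_space F0" "sets F0 = sets borel"
  using F0 by (auto simp: real_distribution_def real_distribution_axioms_def)

lemma BB_prob: "prob_space (PiM UNIV (\<lambda>_::nat. beta1 a))"
  by (rule prob_space_PiM) (rule prob_space_beta1[OF a])

lemma TT_prob: "prob_space (PiM UNIV (\<lambda>_::nat. F0))"
  by (rule prob_space_PiM) (rule F0p(1))

lemma AE_BB: "AE v in PiM UNIV (\<lambda>_::nat. beta1 a). \<forall>i. 0 < v i \<and> v i < 1"
proof -
  interpret P: product_prob_space "\<lambda>_::nat. beta1 a" UNIV
    using prob_space_beta1[OF a] by (simp add: product_prob_space_def product_sigma_finite_def product_prob_space_axioms_def prob_space_imp_sigma_finite)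
  show ?thesis
    unfolding AE_all_countable by (intro allI P.AE_component[OF _ AE_beta1]) simp
qed

lemma RN_measurable[measurable]: "RN N \<in> borel_measurable (PiM UNIV (\<lambda>_::nat. beta1 a))"
  unfolding RN_def by measurable

lemma RN_integrable: "integrable (PiM UNIV (\<lambda>_::nat. beta1 a)) (\<lambda>v. \<bar>RN N v\<bar>)"
proof -
  interpret prob_space "PiM UNIV (\<lambda>_::nat. beta1 a)" by (rule BB_prob)
  show ?thesis
  proof (rule integrable_const_bound[where B=1])
    show "AE x in PiM UNIV (\<lambda>_::nat. beta1 a). norm \<bar>RN N x\<bar> \<le> 1"
      using AE_BB
    proof (rule eventually_mono)
      fix x :: "nat \<Rightarrow> real" assume "\<forall>i. 0 < x i \<and> x i < 1"
      then have u: "\<forall>i. 0 \<le> x i \<and> x i \<le> 1" by (simp add: less_imp_le)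
      show "norm \<bar>RN N x\<bar> \<le> 1" using RN_le1[OF u] RN_nonneg[OF u] by simp
    qed
  qed measurable
qed

lemma RN_int: "(\<integral>v. \<bar>RN N v\<bar> \<partial>PiM UNIV (\<lambda>_::nat. beta1 a)) = (a / (a + 1)) ^ N"
proof -
  have "(\<integral>v. \<bar>RN N v\<bar> \<partial>PiM UNIV (\<lambda>_::nat. beta1 a)) = (\<integral>v. (\<Prod>j<N. \<bar>1 - v j\<bar>) \<partial>PiM UNIV (\<lambda>_::nat. beta1 a))"
    unfolding RN_def by (simp add: abs_prod)
  also have "\<dots> = (\<Prod>j<N. \<integral>x. \<bar>1 - x\<bar> \<partial>beta1 a)"
    by (rule PiM_UNIV_integral_prod[OF prob_space_beta1[OF a]])
       (auto intro!: beta1_integrable[OF a, where B=1])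
  also have "(\<integral>x. \<bar>1 - x\<bar> \<partial>beta1 a) = (\<integral>x. 1 - x \<partial>beta1 a)"
  proof (rule integral_cong_AE)
    show "AE x in beta1 a. \<bar>1 - x\<bar> = 1 - x" using AE_beta1[of a] by eventually_elim auto
  qed measurable
  also have "\<dots> = a / (a + 1)" by (rule beta1_m1[OF a])
  finally show ?thesis by simp
qed

lemma AE_good: "AE v in PiM UNIV (\<lambda>_::nat. beta1 a). sb_good v"
proof -
  let ?B = "PiM UNIV (\<lambda>_::nat. beta1 a)"
  define r where "r v = (INF N. ennreal \<bar>RN N v\<bar>)" for v
  have rm[measurable]: "r \<in> borel_measurable ?B" unfolding r_def by measurable
  have le: "(\<integral>\<^sup>+v. r v \<partial>?B) \<le> ennreal ((a / (a + 1)) ^ N)" for N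
  proof -
    have "(\<integral>\<^sup>+v. r v \<partial>?B) \<le> (\<integral>\<^sup>+v. ennreal \<bar>RN N v\<bar> \<partial>?B)"
      unfolding r_def by (intro nn_integral_mono INF_lower) auto
    also have "\<dots> = ennreal (\<integral>v. \<bar>RN N v\<bar> \<partial>?B)"
      by (rule nn_integral_eq_integral[OF RN_integrable]) auto
    finally show ?thesis by (simp add: RN_int)
  qed
  have "(\<lambda>N. ennreal ((a / (a + 1)) ^ N)) \<longlonglongrightarrow> ennreal 0"
    using a by (intro tendsto_ennrealI LIMSEQ_power_zero) auto
  then have "(\<integral>\<^sup>+v. r v \<partial>?B) \<le> ennreal 0"
    using le by (intro LIMSEQ_le_const[where a="(\<integral>\<^sup>+v. r v \<partial>?B)"]) auto
  then have "(\<integral>\<^sup>+v. r v \<partial>?B) = 0" by simp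
  then have "AE v in ?B. r v = 0" using nn_integral_0_iff_AE[OF rm] by simp
  then show ?thesis using AE_BB
    by eventually_elim (auto intro!: good_from_RN simp: r_def less_imp_le)
qed

end

lemma sb_weight_le1: "(\<forall>i. 0 \<le> v i \<and> v i \<le> 1) \<Longrightarrow> sb_weight v i \<le> 1"
  unfolding sb_weight_def by (auto intro!: mult_le_one prod_le_1 prod_nonneg)

context
  fixes a :: real and F0 :: "real measure"
  assumes a: "a > 0" and F0: "real_distribution F0"
begin

lemma w2_int: "(\<integral>v. (sb_weight v i)\<^sup>2 \<partial>PiM UNIV (\<lambda>_::nat. beta1 a)) = (2 / ((a + 1) * (a + 2))) * (a / (a + 2)) ^ i"
proof -
  define h where "h j x = (if j = i then x\<^sup>2 else (1 - x)\<^sup>2)" for j :: nat and x :: real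
  have eq: "(sb_weight v i)\<^sup>2 = (\<Prod>j<Suc i. h j (v j))" for v
    unfolding sb_weight_def h_def
    by (simp add: power_mult_distrib prod_power_distrib)
  have hi: "integrable (beta1 a) (h j)" for j
    unfolding h_def by (rule beta1_integrable[OF a, where B=1]) (auto simp: power_le_one abs_le_iff)
  have "(\<integral>v. (sb_weight v i)\<^sup>2 \<partial>PiM UNIV (\<lambda>_::nat. beta1 a)) = (\<integral>v. (\<Prod>j<Suc i. h j (v j)) \<partial>PiM UNIV (\<lambda>_::nat. beta1 a))"
    unfolding eq ..
  also have "\<dots> = (\<Prod>j<Suc i. \<integral>x. h j x \<partial>beta1 a)"
    by (rule PiM_UNIV_integral_prod[OF prob_space_beta1[OF a] _ hi]) simp
  also have "\<dots> = (\<Prod>j<i. \<integral>x. h j x \<partial>beta1 a) * (\<integral>x. h i x \<partial>beta1 a)"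
    by simp
  also have "(\<Prod>j<i. \<integral>x. h j x \<partial>beta1 a) = (\<Prod>j<i. a / (a + 2))"
    by (rule prod.cong) (auto simp: h_def beta1_m2[OF a])
  also have "(\<integral>x. h i x \<partial>beta1 a) = 2 / ((a + 1) * (a + 2))"
    by (simp add: h_def beta1_v2[OF a])
  finally show ?thesis by simp
qed

lemma ww_integrable: "integrable (PiM UNIV (\<lambda>_::nat. beta1 a)) (\<lambda>v. sb_weight v i * sb_weight v j)"
proof -
  interpret prob_space "PiM UNIV (\<lambda>_::nat. beta1 a)" by (rule BB_prob[OF a F0])
  show ?thesis
  proof (rule integrable_const_bound[where B=1])
    show "AE x in PiM UNIV (\<lambda>_::nat. beta1 a). norm (sb_weight x i * sb_weight x j) \<le> 1"
      using AE_BB[OF a F0]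
    proof (rule eventually_mono)
      fix x :: "nat \<Rightarrow> real" assume "\<forall>i. 0 < x i \<and> x i < 1"
      then have u: "\<forall>i. 0 \<le> x i \<and> x i \<le> 1" by (simp add: less_imp_le)
      show "norm (sb_weight x i * sb_weight x j) \<le> 1"
        using sb_weight_le1[OF u] sb_weight_nonneg[OF u]
        by (simp add: abs_mult mult_le_one)
    qed
  qed (unfold sb_weight_def, measurable)
qed

context
  fixes S :: "real set"
  assumes S: "S \<in> sets borel"
begin

definition "pp = measure F0 S"
definition "xi y = indicator S y - pp" for y :: real

lemma pp01: "0 \<le> pp" "pp \<le> 1"
  unfolding pp_def using F0p(1)[OF a F0] prob_space.prob_le_1 by auto

lemma xi_bound: "\<bar>xi y\<bar> \<le> 1"
  using pp01 by (auto simp: xi_def indicator_def)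

lemma xx_bound: "\<bar>xi y * xi z\<bar> \<le> 1" "xi y * xi z \<le> 1"
proof -
  show "\<bar>xi y * xi z\<bar> \<le> 1"
    unfolding abs_mult by (rule mult_le_one) (auto simp: xi_bound)
  then show "xi y * xi z \<le> 1" by simp
qed

lemma xi_measurable[measurable]: "xi \<in> borel_measurable borel"
  unfolding xi_def using S by measurable

lemma xi_integrable: "integrable F0 xi"
proof -
  interpret prob_space F0 by (rule F0p(1)[OF a F0])
  show ?thesis
    by (rule integrable_const_bound[where B=1]) (auto simp: xi_bound measurable_cong_sets[OF F0p(2)[OF a F0] refl])
qed

lemma xi_int0: "(\<integral>y. xi y \<partial>F0) = 0"
proof -
  interpret prob_space F0 by (rule F0p(1)[OF a F0])
  have Si: "S \<in> sets F0" using S F0p(2)[OF a F0] by simp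
  have "(\<integral>y. xi y \<partial>F0) = (\<integral>y. indicator S y \<partial>F0) - (\<integral>y. pp \<partial>F0)"
    unfolding xi_def by (rule Bochner_Integration.integral_diff) (use Si in \<open>auto intro!: integrable_real_indicator simp: less_top[symmetric]\<close>)
  also have "\<dots> = 0" using Si prob_space by (simp add: pp_def)
  finally show ?thesis .
qed

lemma xx_integrable: "integrable (PiM UNIV (\<lambda>_::nat. F0)) (\<lambda>\<theta>. xi (\<theta> i) * xi (\<theta> j))"
proof -
  interpret prob_space "PiM UNIV (\<lambda>_::nat. F0)" by (rule TT_prob[OF a F0])
  have [measurable_cong]: "sets F0 = sets borel" by (rule F0p(2)[OF a F0])
  show ?thesis
  proof (rule integrable_const_bound[where B=1])
    show "AE x in PiM UNIV (\<lambda>_::nat. F0). norm (xi (x i) * xi (x j)) \<le> 1"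
      using xx_bound by (intro AE_I2) simp
  qed measurable
qed

lemma xx_off: "i \<noteq> j \<Longrightarrow> (\<integral>\<theta>. xi (\<theta> i) * xi (\<theta> j) \<partial>PiM UNIV (\<lambda>_::nat. F0)) = 0"
proof -
  assume ij: "i \<noteq> j"
  have "(\<integral>\<theta>. xi (\<theta> i) * xi (\<theta> j) \<partial>PiM UNIV (\<lambda>_::nat. F0)) = (\<integral>\<theta>. (\<Prod>k\<in>{i, j}. xi (\<theta> k)) \<partial>PiM UNIV (\<lambda>_::nat. F0))"
    using ij by simp
  also have "\<dots> = (\<Prod>k\<in>{i, j}. \<integral>y. xi y \<partial>F0)"
    by (rule PiM_UNIV_integral_prod[OF F0p(1)[OF a F0]]) (auto intro: xi_integrable)
  also have "\<dots> = 0" using ij by (simp add: xi_int0)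
  finally show ?thesis .
qed

lemma xx_diag: "(\<integral>\<theta>. xi (\<theta> i) * xi (\<theta> i) \<partial>PiM UNIV (\<lambda>_::nat. F0)) \<le> 1"
  "0 \<le> (\<integral>\<theta>. xi (\<theta> i) * xi (\<theta> i) \<partial>PiM UNIV (\<lambda>_::nat. F0))"
proof -
  interpret prob_space "PiM UNIV (\<lambda>_::nat. F0)" by (rule TT_prob[OF a F0])
  show "(\<integral>\<theta>. xi (\<theta> i) * xi (\<theta> i) \<partial>PiM UNIV (\<lambda>_::nat. F0)) \<le> 1"
    by (rule integral_le_const[OF xx_integrable]) (use xx_bound in \<open>auto intro!: AE_I2\<close>)
  show "0 \<le> (\<integral>\<theta>. xi (\<theta> i) * xi (\<theta> i) \<partial>PiM UNIV (\<lambda>_::nat. F0))"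
    by (rule integral_nonneg_AE) auto
qed


lemma w_integrable: "integrable (PiM UNIV (\<lambda>_::nat. beta1 a)) (\<lambda>v. sb_weight v i)"
proof -
  interpret prob_space "PiM UNIV (\<lambda>_::nat. beta1 a)" by (rule BB_prob[OF a F0])
  show ?thesis
  proof (rule integrable_const_bound[where B=1])
    show "AE x in PiM UNIV (\<lambda>_::nat. beta1 a). norm (sb_weight x i) \<le> 1"
      using AE_BB[OF a F0]
    proof (rule eventually_mono)
      fix x :: "nat \<Rightarrow> real" assume "\<forall>i. 0 < x i \<and> x i < 1"
      then have u: "\<forall>i. 0 \<le> x i \<and> x i \<le> 1" by (simp add: less_imp_le)
      show "norm (sb_weight x i) \<le> 1"
        using sb_weight_le1[OF u] sb_weight_nonneg[OF u] by simp
    qed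
  qed (unfold sb_weight_def, measurable)
qed

lemma x_integrable: "integrable (PiM UNIV (\<lambda>_::nat. F0)) (\<lambda>\<theta>. xi (\<theta> i))"
proof -
  interpret prob_space "PiM UNIV (\<lambda>_::nat. F0)" by (rule TT_prob[OF a F0])
  have [measurable_cong]: "sets F0 = sets borel" by (rule F0p(2)[OF a F0])
  show ?thesis
    by (rule integrable_const_bound[where B=1]) (auto simp: xi_bound)
qed

abbreviation "OM \<equiv> PiM UNIV (\<lambda>_::nat. beta1 a) \<Otimes>\<^sub>M PiM UNIV (\<lambda>_::nat. F0)"

lemma OM_prob: "prob_space OM"
  by (rule prob_space_pair[OF BB_prob[OF a F0] TT_prob[OF a F0]])

lemma SN_eq: "SN S pp N \<omega> = (\<Sum>i<N. sb_weight (fst \<omega>) i * xi (snd \<omega> i))"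
  by (simp add: SN_def xi_def)

lemma SN_integrable: "integrable OM (SN S pp N)"
  unfolding SN_eq[abs_def]
  by (intro Bochner_Integration.integrable_sum pair_integral_mult(1)[OF BB_prob[OF a F0] TT_prob[OF a F0] w_integrable x_integrable])

lemma SN2_eq: "(SN S pp N \<omega>)\<^sup>2 = (\<Sum>i<N. \<Sum>j<N. (sb_weight (fst \<omega>) i * sb_weight (fst \<omega>) j) * (xi (snd \<omega> i) * xi (snd \<omega> j)))"
  unfolding SN_eq power2_eq_square sum_product by (simp add: mult_ac)

lemma term2_integrable: "integrable OM (\<lambda>\<omega>. (sb_weight (fst \<omega>) i * sb_weight (fst \<omega>) j) * (xi (snd \<omega> i) * xi (snd \<omega> j)))"
  using pair_integral_mult(1)[OF BB_prob[OF a F0] TT_prob[OF a F0] ww_integrable xx_integrable, of i j i j] .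

lemma SN2_integrable: "integrable OM (\<lambda>\<omega>. (SN S pp N \<omega>)\<^sup>2)"
  unfolding SN2_eq
  by (intro Bochner_Integration.integrable_sum term2_integrable)

lemma SN2_bound: "(\<integral>\<omega>. (SN S pp N \<omega>)\<^sup>2 \<partial>OM) \<le> 1 / (a + 1)"
proof -
  let ?B = "PiM UNIV (\<lambda>_::nat. beta1 a)" and ?T = "PiM UNIV (\<lambda>_::nat. F0)"
  define EB where "EB i j = (\<integral>v. sb_weight v i * sb_weight v j \<partial>?B)" for i j
  define ET where "ET i j = (\<integral>\<theta>. xi (\<theta> i) * xi (\<theta> j) \<partial>?T)" for i j
  have "(\<integral>\<omega>. (SN S pp N \<omega>)\<^sup>2 \<partial>OM) = (\<integral>\<omega>. (\<Sum>i<N. \<Sum>j<N. (sb_weight (fst \<omega>) i * sb_weight (fst \<omega>) j) * (xi (snd \<omega> i) * xi (snd \<omega> j))) \<partial>OM)"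
    unfolding SN2_eq ..
  also have "\<dots> = (\<Sum>i<N. \<integral>\<omega>. (\<Sum>j<N. (sb_weight (fst \<omega>) i * sb_weight (fst \<omega>) j) * (xi (snd \<omega> i) * xi (snd \<omega> j))) \<partial>OM)"
    by (intro Bochner_Integration.integral_sum Bochner_Integration.integrable_sum term2_integrable)
  also have "\<dots> = (\<Sum>i<N. \<Sum>j<N. \<integral>\<omega>. (sb_weight (fst \<omega>) i * sb_weight (fst \<omega>) j) * (xi (snd \<omega> i) * xi (snd \<omega> j)) \<partial>OM)"
    by (intro sum.cong refl Bochner_Integration.integral_sum term2_integrable)
  also have "\<dots> = (\<Sum>i<N. \<Sum>j<N. EB i j * ET i j)"
    unfolding EB_def ET_def
    by (intro sum.cong refl pair_integral_mult(2)[OF BB_prob[OF a F0] TT_prob[OF a F0] ww_integrable xx_integrable])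
  also have "\<dots> = (\<Sum>i<N. EB i i * ET i i)"
  proof (rule sum.cong[OF refl])
    fix i assume i: "i \<in> {..<N}"
    have "(\<Sum>j<N. EB i j * ET i j) = (\<Sum>j<N. if j = i then EB i i * ET i i else 0)"
      by (rule sum.cong) (auto simp: ET_def xx_off)
    also have "\<dots> = EB i i * ET i i" using i by simp
    finally show "(\<Sum>j<N. EB i j * ET i j) = EB i i * ET i i" .
  qed
  also have "\<dots> \<le> (\<Sum>i<N. 2 / ((a + 1) * (a + 2)) * (a / (a + 2)) ^ i)"
  proof (rule sum_mono)
    fix i
    have e: "EB i i = 2 / ((a + 1) * (a + 2)) * (a / (a + 2)) ^ i"
      unfolding EB_def using w2_int[of i] by (simp add: power2_eq_square)
    have "0 \<le> EB i i" unfolding e using a by simp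
    moreover have "ET i i \<le> 1" "0 \<le> ET i i" unfolding ET_def by (rule xx_diag)+
    ultimately have "EB i i * ET i i \<le> EB i i * 1" by (intro mult_left_mono)
    then show "EB i i * ET i i \<le> 2 / ((a + 1) * (a + 2)) * (a / (a + 2)) ^ i" using e by simp
  qed
  also have "\<dots> = 2 / ((a + 1) * (a + 2)) * (\<Sum>i<N. (a / (a + 2)) ^ i)"
    by (simp add: sum_distrib_left)
  also have "(\<Sum>i<N. (a / (a + 2)) ^ i) = (1 - (a / (a + 2)) ^ N) / (1 - a / (a + 2))"
    using a by (subst sum_gp_strict) auto
  also have "2 / ((a + 1) * (a + 2)) * ((1 - (a / (a + 2)) ^ N) / (1 - a / (a + 2))) = (1 - (a / (a + 2)) ^ N) / (a + 1)"
  proof -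
    have h: "1 - a / (a + 2) = 2 / (a + 2)" using a by (simp add: field_simps)
    have g: "2 / ((a + 1) * (a + 2)) * ((1 - Q) / (2 / (a + 2))) = (1 - Q) / (a + 1)" for Q :: real
    proof -
      have nz: "4 + (a * 6 + a * (a * 2)) \<noteq> 0" using a by (smt (verit) mult_pos_pos)
      show ?thesis using a nz by (simp add: field_simps)
    qed
    show ?thesis unfolding h by (rule g)
  qed
  also have "\<dots> \<le> 1 / (a + 1)"
    using a by (intro divide_right_mono) auto
  finally show ?thesis .
qed

lemma SN_abs_bound: "(\<integral>\<omega>. \<bar>SN S pp N \<omega>\<bar> \<partial>OM) \<le> sqrt (1 / (a + 1))"
proof -
  have "(\<integral>\<omega>. \<bar>SN S pp N \<omega>\<bar> \<partial>OM) \<le> sqrt (\<integral>\<omega>. (SN S pp N \<omega>)\<^sup>2 \<partial>OM)"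
    by (rule prob_CS[OF OM_prob SN_integrable SN2_integrable])
  also have "\<dots> \<le> sqrt (1 / (a + 1))"
    by (rule real_sqrt_le_mono[OF SN2_bound])
  finally show ?thesis .
qed


lemma sbm: "(\<lambda>x. sb_measure (fst x) (snd x)) \<in> OM \<rightarrow>\<^sub>M prob_algebra borel"
  by (rule sb_measurable[OF sets_beta1 F0p(2)[OF a F0]])

lemma Z_measurable: "(\<lambda>\<omega>. \<bar>measure (sb_measure (fst \<omega>) (snd \<omega>)) S - pp\<bar>) \<in> borel_measurable OM"
  using measurable_compose[OF sbm measurable_measure_prob_algebra[OF S]] by measurable

lemma Z_integrable: "integrable OM (\<lambda>\<omega>. \<bar>measure (sb_measure (fst \<omega>) (snd \<omega>)) S - pp\<bar>)"
proof -
  interpret prob_space OM by (rule OM_prob)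
  show ?thesis
  proof (rule integrable_const_bound[where B=1])
    show "AE x in OM. norm \<bar>measure (sb_measure (fst x) (snd x)) S - pp\<bar> \<le> 1"
    proof (intro AE_I2)
      fix x
      have "measure (sb_measure (fst x) (snd x)) S \<le> 1" "0 \<le> measure (sb_measure (fst x) (snd x)) S"
        using prob_space.prob_le_1[OF sb_prob] by auto
      then show "norm \<bar>measure (sb_measure (fst x) (snd x)) S - pp\<bar> \<le> 1" using pp01 unfolding real_norm_def abs_abs abs_le_iff by linarith
    qed
  qed (rule Z_measurable)
qed

lemma RNfst: "integrable OM (\<lambda>\<omega>. \<bar>RN N (fst \<omega>)\<bar>)" "(\<integral>\<omega>. \<bar>RN N (fst \<omega>)\<bar> \<partial>OM) = (a / (a + 1)) ^ N"
proof -
  have i1: "integrable (PiM UNIV (\<lambda>_::nat. F0)) (\<lambda>_. 1::real)"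
    using prob_space.finite_measure[OF TT_prob[OF a F0]] by (simp add: finite_measure.integrable_const)
  show "integrable OM (\<lambda>\<omega>. \<bar>RN N (fst \<omega>)\<bar>)"
    using pair_integral_mult(1)[OF BB_prob[OF a F0] TT_prob[OF a F0] RN_integrable[OF a F0] i1] by simp
  show "(\<integral>\<omega>. \<bar>RN N (fst \<omega>)\<bar> \<partial>OM) = (a / (a + 1)) ^ N"
    using pair_integral_mult(2)[OF BB_prob[OF a F0] TT_prob[OF a F0] RN_integrable[OF a F0] i1]
      prob_space.prob_space[OF TT_prob[OF a F0]] by (simp add: RN_int[OF a F0])
qed

lemma AE_OM_good: "AE \<omega> in OM. sb_good (fst \<omega>)"
proof -
  interpret p: pair_prob_space "PiM UNIV (\<lambda>_::nat. beta1 a)" "PiM UNIV (\<lambda>_::nat. F0)"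
    using BB_prob[OF a F0] TT_prob[OF a F0]
    by (simp add: pair_prob_space_def pair_sigma_finite_def prob_space_imp_sigma_finite)
  have se: "sets (PiM UNIV (\<lambda>_::nat. beta1 a)) = sets (PiM UNIV (\<lambda>_::nat. borel :: real measure))"
    by (intro sets_PiM_cong) auto
  have [measurable]: "Measurable.pred (PiM UNIV (\<lambda>_::nat. beta1 a)) sb_good"
    unfolding measurable_cong_sets[OF se refl] by (rule sb_good_measurable)
  show ?thesis
  proof (rule p.AE_pair_measure)
    show "{x \<in> space OM. sb_good (fst x)} \<in> sets OM" by measurable
    show "AE x in PiM UNIV (\<lambda>_::nat. beta1 a). AE y in PiM UNIV (\<lambda>_::nat. F0). sb_good (fst (x, y))"
      using AE_good[OF a F0] by eventually_elim simp
  qed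
qed

lemma Z_bound: "(\<integral>\<omega>. \<bar>measure (sb_measure (fst \<omega>) (snd \<omega>)) S - pp\<bar> \<partial>OM) \<le> sqrt (1 / (a + 1))"
proof -
  let ?Z = "(\<integral>\<omega>. \<bar>measure (sb_measure (fst \<omega>) (snd \<omega>)) S - pp\<bar> \<partial>OM)"
  have le: "?Z \<le> sqrt (1 / (a + 1)) + (a / (a + 1)) ^ N" for N
  proof -
    have "?Z \<le> (\<integral>\<omega>. \<bar>SN S pp N \<omega>\<bar> + \<bar>RN N (fst \<omega>)\<bar> \<partial>OM)"
    proof (rule integral_mono_AE[OF Z_integrable])
      show "integrable OM (\<lambda>\<omega>. \<bar>SN S pp N \<omega>\<bar> + \<bar>RN N (fst \<omega>)\<bar>)"
        by (intro Bochner_Integration.integrable_add integrable_abs SN_integrable RNfst(1))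
      show "AE \<omega> in OM. \<bar>measure (sb_measure (fst \<omega>) (snd \<omega>)) S - pp\<bar> \<le> \<bar>SN S pp N \<omega>\<bar> + \<bar>RN N (fst \<omega>)\<bar>"
        using AE_OM_good
      proof eventually_elim
        case (elim \<omega>)
        have "\<bar>measure (sb_measure (fst \<omega>) (snd \<omega>)) S - pp\<bar> \<le> \<bar>SN S pp N (fst \<omega>, snd \<omega>)\<bar> + RN N (fst \<omega>)"
          by (rule sb_dev_bound[OF elim S pp01])
        then show ?case by simp
      qed
    qed
    also have "\<dots> = (\<integral>\<omega>. \<bar>SN S pp N \<omega>\<bar> \<partial>OM) + (\<integral>\<omega>. \<bar>RN N (fst \<omega>)\<bar> \<partial>OM)"
      by (intro Bochner_Integration.integral_add integrable_abs SN_integrable RNfst(1))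
    also have "\<dots> \<le> sqrt (1 / (a + 1)) + (a / (a + 1)) ^ N"
      unfolding RNfst(2) using SN_abs_bound[of N] by simp
    finally show ?thesis .
  qed
  have "(\<lambda>N. sqrt (1 / (a + 1)) + (a / (a + 1)) ^ N) \<longlonglongrightarrow> sqrt (1 / (a + 1)) + 0"
    using a by (intro tendsto_add tendsto_const LIMSEQ_power_zero) auto
  then show ?thesis
    using le by (intro LIMSEQ_le_const[where a="?Z"]) auto
qed

lemma DP_bound: "(\<integral>P. \<bar>measure P S - measure F0 S\<bar> \<partial>DP a F0) \<le> sqrt (1 / (a + 1))"
proof -
  have cp: "(\<lambda>(v, \<theta>). sb_measure v \<theta>) = (\<lambda>x. sb_measure (fst x) (snd x))" by auto
  have fm: "(\<lambda>P. \<bar>measure P S - pp\<bar>) \<in> borel_measurable (prob_algebra borel)"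
    using measurable_measure_prob_algebra[OF S] by measurable
  have "(\<integral>P. \<bar>measure P S - measure F0 S\<bar> \<partial>DP a F0) = (\<integral>P. \<bar>measure P S - pp\<bar> \<partial>distr OM (prob_algebra borel) (\<lambda>x. sb_measure (fst x) (snd x)))"
    unfolding DP_def cp pp_def ..
  also have "\<dots> = (\<integral>\<omega>. \<bar>measure (sb_measure (fst \<omega>) (snd \<omega>)) S - pp\<bar> \<partial>OM)"
    by (rule integral_distr[OF sbm fm])
  finally show ?thesis using Z_bound by simp
qed

end

end

lemma quantile_props:
  assumes H: "real_distribution H" and c: "0 < c" "c < 1"
  defines "q \<equiv> Inf {t. c \<le> cdf H t}"
  shows "c \<le> cdf H q" and "\<And>t. t < q \<Longrightarrow> cdf H t < c" and "measure H {..<q} \<le> c"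
proof -
  interpret real_distribution H by fact
  let ?A = "{t. c \<le> cdf H t}"
  have "eventually (\<lambda>t. c < cdf H t) at_top"
    by (rule order_tendstoD(1)[OF cdf_lim_at_top_prob c(2)])
  then obtain t0 where "c < cdf H t0" by (auto simp: eventually_at_top_linorder)
  then have ne: "?A \<noteq> {}" by (auto intro!: exI[of _ t0])
  have "eventually (\<lambda>t. cdf H t < c) at_bot"
    by (rule order_tendstoD(2)[OF cdf_lim_at_bot c(1)])
  then obtain b where b: "\<And>t. t \<le> b \<Longrightarrow> cdf H t < c" by (auto simp: eventually_at_bot_linorder)
  have bdd: "bdd_below ?A"
  proof (rule bdd_belowI[where m=b])
    fix x assume "x \<in> ?A" then show "b \<le> x" using b[of x] by (cases "x \<le> b") auto
  qed
  show lt: "cdf H t < c" if "t < q" for t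
  proof (rule ccontr)
    assume "\<not> cdf H t < c"
    then have "t \<in> ?A" by simp
    then have "q \<le> t" unfolding q_def by (rule cInf_lower[OF _ bdd])
    with that show False by simp
  qed
  have "(cdf H \<longlongrightarrow> cdf H q) (at_right q)"
    using cdf_is_right_cont[of q] by (simp add: continuous_within)
  moreover have "eventually (\<lambda>s. c \<le> cdf H s) (at_right q)"
  proof (rule eventually_at_rightI[where b="q + 1"])
    fix s assume s: "s \<in> {q<..<q + 1}"
    then have "Inf ?A < s" unfolding q_def by simp
    then obtain t where t: "t \<in> ?A" "t < s" using cInf_less_iff[OF ne bdd] by auto
    then show "c \<le> cdf H s" using cdf_nondecreasing[of t s] by simp
  qed simp
  ultimately show "c \<le> cdf H q"
    by (rule tendsto_lowerbound) simp
  have "(cdf H \<longlongrightarrow> measure H {..<q}) (at_left q)" by (rule cdf_at_left)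
  moreover have "eventually (\<lambda>s. cdf H s \<le> c) (at_left q)"
  proof (rule eventually_at_leftI[where a="q - 1"])
    fix s assume "s \<in> {q - 1<..<q}"
    then show "cdf H s \<le> c" by (intro less_imp_le lt) auto
  qed simp
  ultimately show "measure H {..<q} \<le> c"
    by (rule tendsto_upperbound) simp
qed

lemma bracketing:
  assumes H: "real_distribution H" and k: "k > (0::nat)"
  shows "\<exists>\<F>. finite \<F> \<and> \<F> \<subseteq> sets borel \<and> card \<F> \<le> 2 * k \<and>
     (\<forall>P. prob_space P \<longrightarrow> sets P = sets borel \<longrightarrow>
        kolmogorov_dist P H \<le> (\<Sum>S\<in>\<F>. \<bar>measure P S - measure H S\<bar>) + 1 / k)"
proof -
  interpret real_distribution H by fact
  define q where "q j = Inf {t. real j / k \<le> cdf H t}" for j :: nat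
  have qp: "real j / k \<le> cdf H (q j)" "\<And>t. t < q j \<Longrightarrow> cdf H t < real j / k" "measure H {..<q j} \<le> real j / k"
    if "j \<in> {1..k-1}" for j
  proof -
    have c: "0 < real j / k" "real j / k < 1" using that k by auto
    show "real j / k \<le> cdf H (q j)" "\<And>t. t < q j \<Longrightarrow> cdf H t < real j / k" "measure H {..<q j} \<le> real j / k"
      using quantile_props[OF H c] unfolding q_def by auto
  qed
  define \<F> where "\<F> = (\<lambda>j. {..q j}) ` {1..k-1} \<union> (\<lambda>j. {..<q j}) ` {1..k-1}"
  have fin: "finite \<F>" unfolding \<F>_def by auto
  have sub: "\<F> \<subseteq> sets borel" unfolding \<F>_def by auto
  have card: "card \<F> \<le> 2 * k"
  proof -
    have "card \<F> \<le> card ((\<lambda>j. {..q j}) ` {1..k-1}) + card ((\<lambda>j. {..<q j}) ` {1..k-1})"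
      unfolding \<F>_def by (rule card_Un_le)
    also have "\<dots> \<le> card {1..k-1} + card {1..k-1}"
      by (intro add_mono card_image_le) auto
    finally show ?thesis by simp
  qed
  have main: "kolmogorov_dist P H \<le> (\<Sum>S\<in>\<F>. \<bar>measure P S - measure H S\<bar>) + 1 / k"
    if P: "prob_space P" "sets P = sets borel" for P
  proof (rule kd_le)
    fix t :: real
    interpret P: prob_space P by fact
    define \<Sigma> where "\<Sigma> = (\<Sum>S\<in>\<F>. \<bar>measure P S - measure H S\<bar>)"
    have inF: "S \<in> \<F> \<Longrightarrow> \<bar>measure P S - measure H S\<bar> \<le> \<Sigma>" for S
      unfolding \<Sigma>_def by (rule member_le_sum[OF _ _ fin]) auto
    define J where "J = {j \<in> {1..k-1}. q j \<le> t}"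
    have finJ: "finite J" unfolding J_def by auto
    define j0 where "j0 = (if J = {} then 0 else Max J)"
    have j0k: "j0 + 1 \<le> k"
    proof (cases "J = {}")
      case False
      then have "Max J \<in> J" using Max_in[OF finJ] by blast
      then have "Max J \<le> k - 1" unfolding J_def by auto
      then show ?thesis using k False unfolding j0_def by simp
    qed (use k j0_def in simp)
    define L where "L = (if j0 = 0 then {} else {..q j0})"
    define U where "U = (if j0 + 1 = k then UNIV else {..<q (j0 + 1)})"
    have j0J: "j0 \<noteq> 0 \<Longrightarrow> j0 \<in> J"
      unfolding j0_def using Max_in[OF finJ] by (auto split: if_splits)
    have LU: "L \<subseteq> {..t}" "{..t} \<subseteq> U"
    proof -
      show "L \<subseteq> {..t}" unfolding L_def using j0J by (auto simp: J_def)
      show "{..t} \<subseteq> U"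
      proof (cases "j0 + 1 = k")
        case False
        then have j1: "j0 + 1 \<in> {1..k-1}" using j0k by auto
        have "j0 + 1 \<notin> J"
        proof
          assume "j0 + 1 \<in> J"
          then have "j0 + 1 \<le> Max J" using Max_ge[OF finJ] by auto
          moreover have "J \<noteq> {}" using \<open>j0 + 1 \<in> J\<close> by auto
          ultimately show False unfolding j0_def by simp
        qed
        then have "t < q (j0 + 1)" using j1 unfolding J_def by auto
        then show ?thesis unfolding U_def using False by auto
      qed (simp add: U_def)
    qed
    have LUs: "L \<in> sets borel" "U \<in> sets borel" unfolding L_def U_def by auto
    have HL: "real j0 / k \<le> measure H L"
    proof (cases "j0 = 0")
      case False
      then have "j0 \<in> {1..k-1}" using j0J by (auto simp: J_def)
      then show ?thesis using qp(1)[of j0] False by (simp add: L_def cdf_def)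
    qed (simp add: L_def)
    have HU: "measure H U \<le> real (j0 + 1) / k"
    proof (cases "j0 + 1 = k")
      case False
      then have j1: "j0 + 1 \<in> {1..k-1}" using j0k by auto
      then show ?thesis using qp(3)[OF j1] False by (simp add: U_def)
    next
      case True
      then show ?thesis using k prob_space by (simp add: U_def)
    qed
    have gap: "measure H U - measure H L \<le> 1 / k"
      using HL HU k by (simp add: add_divide_distrib)
    have PU: "\<bar>measure P U - measure H U\<bar> \<le> \<Sigma>"
    proof (cases "j0 + 1 = k")
      case True
      then have "\<bar>measure P U - measure H U\<bar> = 0" using P.prob_space prob_space P(2)
        by (simp add: U_def sets_eq_imp_space_eq[OF P(2)])
      moreover have "0 \<le> \<Sigma>" unfolding \<Sigma>_def by (rule sum_nonneg) auto
      ultimately show ?thesis by simp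
    next
      case False
      then have j1: "j0 + 1 \<in> {1..k-1}" using j0k by auto
      have "U \<in> \<F>" unfolding U_def \<F>_def using False j1 by auto
      then show ?thesis by (rule inF)
    qed
    have PL: "\<bar>measure P L - measure H L\<bar> \<le> \<Sigma>"
    proof (cases "j0 = 0")
      case True
      moreover have "0 \<le> \<Sigma>" unfolding \<Sigma>_def by (rule sum_nonneg) auto
      ultimately show ?thesis by (simp add: L_def)
    next
      case False
      then have "j0 \<in> {1..k-1}" using j0J by (auto simp: J_def)
      then show ?thesis using False by (intro inF) (auto simp: L_def \<F>_def)
    qed
    have sP: "S \<in> sets borel \<Longrightarrow> S \<in> sets P" for S using P(2) by simp
    have m1: "measure P L \<le> measure P {..t}" "measure P {..t} \<le> measure P U"
      using LU LUs by (auto intro!: P.finite_measure_mono sP)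
    have m2: "measure H L \<le> measure H {..t}" "measure H {..t} \<le> measure H U"
      using LU LUs by (auto intro!: finite_measure_mono)
    show "\<bar>measure P {..t} - measure H {..t}\<bar> \<le> \<Sigma> + 1 / k"
      using m1 m2 PU PL gap unfolding abs_le_iff by linarith
  qed
  show ?thesis using fin sub card main by blast
qed

lemma sq_bracket: "\<exists>k. k^2 \<le> n \<and> n < (Suc k)^2"
proof (induction n)
  case 0 show ?case by (intro exI[of _ 0]) simp
next
  case (Suc n)
  then obtain k where k: "k^2 \<le> n" "n < (Suc k)^2" by blast
  show ?case
  proof (cases "Suc n < (Suc k)^2")
    case True then show ?thesis using k by (intro exI[of _ k]) simp
  next
    case False
    then have "Suc n = (Suc k)^2" using k by simp
    then show ?thesis by (intro exI[of _ "Suc k"]) (simp add: power2_eq_square)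
  qed
qed

lemma interp:
  fixes d :: "nat \<Rightarrow> real"
  assumes inc: "\<And>n. \<bar>d (Suc n) - d n\<bar> \<le> 1"
    and sub: "\<And>r::nat. \<exists>K. \<forall>k\<ge>K. \<bar>d (k^2)\<bar> \<le> real (k^2) / (real r + 1)"
  shows "(\<lambda>n. d n / n) \<longlonglongrightarrow> 0"
proof -
  have lip: "\<bar>d n - d k\<bar> \<le> real n - real k" if "k \<le> n" for k n
    using that
  proof (induction n rule: dec_induct)
    case base then show ?case by simp
  next
    case (step n)
    have "\<bar>d (Suc n) - d k\<bar> \<le> \<bar>d (Suc n) - d n\<bar> + \<bar>d n - d k\<bar>" by simp
    also have "\<dots> \<le> 1 + (real n - real k)" using inc[of n] step.IH by simp
    finally show ?case by simp
  qed
  show ?thesis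
  proof (rule LIMSEQ_I)
    fix e :: real assume e: "0 < e"
    obtain r :: nat where r: "2 / e < real r" using reals_Archimedean2 by blast
    have r': "1 / (real r + 1) < e / 2"
    proof -
      have "2 < e * (real r + 1)" using r e by (simp add: field_simps)
      then show ?thesis using e by (simp add: field_simps)
    qed
    from sub[of r] obtain K where K0: "\<forall>k\<ge>K. \<bar>d (k^2)\<bar> \<le> real (k^2) / (real r + 1)" ..
    have K: "\<bar>d (k^2)\<bar> \<le> real (k^2) / (real r + 1)" if "k \<ge> K" for k using K0 that by simp
    obtain L :: nat where L: "4 / e < real L" using reals_Archimedean2 by blast
    define K' where "K' = max K (max L 1)"
    show "\<exists>no. \<forall>n\<ge>no. norm (d n / real n - 0) < e"
    proof (intro exI allI impI)
      fix n assume n: "K'^2 \<le> n"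
      obtain k where k: "k^2 \<le> n" "n < (Suc k)^2" using sq_bracket by blast
      have kK: "K' \<le> k"
      proof (rule ccontr)
        assume "\<not> K' \<le> k"
        then have "Suc k \<le> K'" by simp
        then have "(Suc k)^2 \<le> K'^2" by (rule power_mono) simp
        with n k show False by simp
      qed
      then have kK1: "K \<le> k" "L \<le> k" "1 \<le> k" unfolding K'_def by auto
      have kpos: "0 < real k" using kK1 by simp
      have nk2: "real (k^2) \<le> real n" using k by linarith
      have n2: "real n - real (k^2) \<le> 2 * real k"
      proof -
        have "(Suc k)^2 = k^2 + 2 * k + 1" by (simp add: power2_eq_square)
        then have "n < k^2 + 2 * k + 1" using k(2) by simp
        then have "n \<le> k^2 + 2 * k" by simp
        then show ?thesis by linarith
      qed
      have "0 < real (k^2)" using kpos by simp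
      then have npos: "0 < real n" using nk2 by linarith
      have "\<bar>d n\<bar> \<le> \<bar>d (k^2)\<bar> + \<bar>d n - d (k^2)\<bar>" by simp
      also have "\<dots> \<le> real (k^2) / (real r + 1) + 2 * real k"
        using K[OF kK1(1)] lip[OF k(1)] n2 by linarith
      finally have dn: "\<bar>d n\<bar> \<le> real (k^2) / (real r + 1) + 2 * real k" .
      have k2pos: "0 < real (k^2)" using kpos by simp
      have cnn: "0 \<le> real (k^2) / (real r + 1) + 2 * real k" using kpos by simp
      have "\<bar>d n\<bar> / real n \<le> (real (k^2) / (real r + 1) + 2 * real k) / real n"
        by (rule divide_right_mono[OF dn]) (use npos in simp)
      also have "\<dots> \<le> (real (k^2) / (real r + 1) + 2 * real k) / real (k^2)"
        by (rule divide_left_mono[OF nk2 cnn]) (use npos k2pos in simp)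
      also have "\<dots> = 1 / (real r + 1) + 2 / real k"
      proof -
        have e1: "real (k^2) / (real r + 1) / real (k^2) = 1 / (real r + 1)" using k2pos by simp
        have e2: "2 * real k / real (k^2) = 2 / real k" using kpos by (simp add: power2_eq_square)
        show ?thesis unfolding add_divide_distrib e1 e2 ..
      qed
      also have "2 / real k < e / 2"
      proof -
        have "4 / e < real k" using L kK1 by linarith
        then have "4 < e * real k" using e by (simp add: field_simps)
        then show ?thesis using kpos by (simp add: field_simps)
      qed
      finally have "\<bar>d n\<bar> / real n < 1 / (real r + 1) + e / 2" by simp
      then have "\<bar>d n\<bar> / real n < e" using r' by simp
      then show "norm (d n / real n - 0) < e" by simp
    qed
  qed
qed


lemma slln01:
  fixes Z :: "nat \<Rightarrow> 'a \<Rightarrow> real"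
  assumes M: "prob_space M" and Zm: "\<And>i. Z i \<in> borel_measurable M"
    and Z01: "\<And>i \<omega>. 0 \<le> Z i \<omega> \<and> Z i \<omega> \<le> 1" and p: "0 \<le> p" "p \<le> 1"
    and unc: "\<And>i j. i \<noteq> j \<Longrightarrow> (\<integral>\<omega>. (Z i \<omega> - p) * (Z j \<omega> - p) \<partial>M) = 0"
  shows "AE \<omega> in M. (\<lambda>n. (\<Sum>i<n. Z i \<omega>) / n) \<longlonglongrightarrow> p"
proof -
  interpret prob_space M by fact
  define Y where "Y i \<omega> = Z i \<omega> - p" for i \<omega>
  have Yb: "\<bar>Y i \<omega>\<bar> \<le> 1" for i \<omega> using Z01[of i \<omega>] p by (auto simp: Y_def)
  have Ym[measurable]: "Y i \<in> borel_measurable M" for i unfolding Y_def using Zm[of i] by measurable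
  have YYb: "\<bar>Y i \<omega> * Y j \<omega>\<bar> \<le> 1" for i j \<omega>
    unfolding abs_mult by (rule mult_le_one) (auto simp: Yb)
  have Yint: "integrable M (\<lambda>\<omega>. Y i \<omega> * Y j \<omega>)" for i j
    by (rule integrable_const_bound[where B=1]) (auto simp: YYb)
  define D where "D n \<omega> = (\<Sum>i<n. Y i \<omega>)" for n \<omega>
  have Dm[measurable]: "D n \<in> borel_measurable M" for n unfolding D_def by measurable
  have D2eq: "(D n \<omega>)\<^sup>2 = (\<Sum>i<n. \<Sum>j<n. Y i \<omega> * Y j \<omega>)" for n \<omega>
    unfolding D_def power2_eq_square sum_product ..
  have D2int: "integrable M (\<lambda>\<omega>. (D n \<omega>)\<^sup>2)" for n
    unfolding D2eq by (intro Bochner_Integration.integrable_sum Yint)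
  have D2: "(\<integral>\<omega>. (D n \<omega>)\<^sup>2 \<partial>M) \<le> real n" for n
  proof -
    have "(\<integral>\<omega>. (D n \<omega>)\<^sup>2 \<partial>M) = (\<Sum>i<n. \<Sum>j<n. \<integral>\<omega>. Y i \<omega> * Y j \<omega> \<partial>M)"
      unfolding D2eq
      by (subst Bochner_Integration.integral_sum, intro Bochner_Integration.integrable_sum Yint)
         (intro sum.cong refl Bochner_Integration.integral_sum Yint)
    also have "\<dots> = (\<Sum>i<n. \<integral>\<omega>. Y i \<omega> * Y i \<omega> \<partial>M)"
    proof (rule sum.cong[OF refl])
      fix i assume i: "i \<in> {..<n}"
      have "(\<Sum>j<n. \<integral>\<omega>. Y i \<omega> * Y j \<omega> \<partial>M) = (\<Sum>j<n. if j = i then \<integral>\<omega>. Y i \<omega> * Y i \<omega> \<partial>M else 0)"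
        by (rule sum.cong) (auto simp: Y_def unc)
      also have "\<dots> = (\<integral>\<omega>. Y i \<omega> * Y i \<omega> \<partial>M)" using i by simp
      finally show "(\<Sum>j<n. \<integral>\<omega>. Y i \<omega> * Y j \<omega> \<partial>M) = (\<integral>\<omega>. Y i \<omega> * Y i \<omega> \<partial>M)" .
    qed
    also have "\<dots> \<le> (\<Sum>i<n. 1)"
    proof (rule sum_mono)
      fix i show "(\<integral>\<omega>. Y i \<omega> * Y i \<omega> \<partial>M) \<le> 1"
        by (rule integral_le_const[OF Yint]) (use YYb in \<open>auto intro!: AE_I2 simp: abs_le_iff\<close>)
    qed
    finally show ?thesis by simp
  qed
  have ae_r: "AE \<omega> in M. \<exists>K. \<forall>k\<ge>K. \<bar>D (k^2) \<omega>\<bar> \<le> real (k^2) / (real r + 1)" for r :: nat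
  proof -
    define e where "e = 1 / (real r + 1)"
    have e: "0 < e" unfolding e_def by simp
    define A where "A m = {\<omega> \<in> space M. (real ((m+1)^2) * e)\<^sup>2 \<le> (D ((m+1)^2) \<omega>)\<^sup>2}" for m
    have Am[measurable]: "A m \<in> sets M" for m unfolding A_def by measurable
    have mA: "measure M (A m) \<le> (1 / e\<^sup>2) * inverse (real (Suc m) ^ 2)" for m
    proof -
      have c: "0 < (real ((m+1)^2) * e)\<^sup>2" using e by simp
      have "measure M (A m) \<le> (\<integral>\<omega>. (D ((m+1)^2) \<omega>)\<^sup>2 \<partial>M) / (real ((m+1)^2) * e)\<^sup>2"
        unfolding A_def by (rule integral_Markov_inequality_measure[OF D2int _ _ c]) auto
      also have "\<dots> \<le> real ((m+1)^2) / (real ((m+1)^2) * e)\<^sup>2"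
        by (rule divide_right_mono[OF D2]) simp
      also have "\<dots> = (1 / e\<^sup>2) * inverse (real (Suc m) ^ 2)"
      proof -
        have xx: "real ((m+1)^2) = real (Suc m) ^ 2" by simp
        have g: "x / (x * e)\<^sup>2 = (1 / e\<^sup>2) * inverse x" if "x > 0" for x :: real
          using e that by (simp add: power2_eq_square field_simps)
        show ?thesis unfolding xx by (rule g) simp
      qed
      finally show ?thesis .
    qed
    have sm: "summable (\<lambda>m. measure M (A m))"
    proof (rule summable_comparison_test'[where N=0])
      have "summable (\<lambda>m. inverse (real m ^ 2))" by (rule inverse_power_summable) simp
      then have "summable (\<lambda>m. inverse (real (Suc m) ^ 2))" by (subst summable_Suc_iff)
      then show "summable (\<lambda>m. (1 / e\<^sup>2) * inverse (real (Suc m) ^ 2))" by (rule summable_mult)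
      fix m show "norm (measure M (A m)) \<le> (1 / e\<^sup>2) * inverse (real (Suc m) ^ 2)"
        using mA[of m] by simp
    qed
    have "AE \<omega> in M. eventually (\<lambda>m. \<omega> \<in> space M - A m) sequentially"
      by (rule borel_cantelli_AE1[OF Am _ sm]) (simp add: less_top[symmetric])
    then show ?thesis using AE_space
    proof eventually_elim
      case (elim \<omega>)
      then have \<omega>: "\<omega> \<in> space M" and ev: "eventually (\<lambda>m. \<omega> \<in> space M - A m) sequentially" by auto
      then obtain M0 where M0: "\<And>m. m \<ge> M0 \<Longrightarrow> \<omega> \<notin> A m" by (auto simp: eventually_sequentially)
      show "\<exists>K. \<forall>k\<ge>K. \<bar>D (k^2) \<omega>\<bar> \<le> real (k^2) / (real r + 1)"
      proof (intro exI allI impI)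
        fix k assume k: "Suc M0 \<le> k"
        then obtain m where m: "k = m + 1" "m \<ge> M0" by (metis Suc_le_D Suc_eq_plus1 Suc_le_mono)
        have "\<omega> \<notin> A m" using M0 m by simp
        then have "(D ((m+1)^2) \<omega>)\<^sup>2 < (real ((m+1)^2) * e)\<^sup>2" using \<omega> by (auto simp: A_def)
        then have "\<bar>D ((m+1)^2) \<omega>\<bar>\<^sup>2 < (real ((m+1)^2) * e)\<^sup>2" by simp
        then have "\<bar>D ((m+1)^2) \<omega>\<bar> < real ((m+1)^2) * e"
          by (rule power2_less_imp_less) (use e in simp)
        then show "\<bar>D (k^2) \<omega>\<bar> \<le> real (k^2) / (real r + 1)"
          using e m by (simp add: e_def divide_inverse)
      qed
    qed
  qed
  then have "AE \<omega> in M. \<forall>r::nat. \<exists>K. \<forall>k\<ge>K. \<bar>D (k^2) \<omega>\<bar> \<le> real (k^2) / (real r + 1)"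
    by (simp add: AE_all_countable)
  then show ?thesis
  proof (rule AE_mp, intro AE_I2 impI)
    fix \<omega> assume H: "\<forall>r::nat. \<exists>K. \<forall>k\<ge>K. \<bar>D (k^2) \<omega>\<bar> \<le> real (k^2) / (real r + 1)"
    have "(\<lambda>n. D n \<omega> / n) \<longlonglongrightarrow> 0"
    proof (rule interp)
      fix n show "\<bar>D (Suc n) \<omega> - D n \<omega>\<bar> \<le> 1" using Yb[of n \<omega>] by (simp add: D_def)
    next
      fix r :: nat show "\<exists>K. \<forall>k\<ge>K. \<bar>D (k^2) \<omega>\<bar> \<le> real (k^2) / (real r + 1)" using H by blast
    qed
    then have lim: "(\<lambda>n. D n \<omega> / n + p) \<longlonglongrightarrow> 0 + p" by (intro tendsto_add tendsto_const)
    have "eventually (\<lambda>n. D n \<omega> / n + p = (\<Sum>i<n. Z i \<omega>) / n) sequentially"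
    proof (rule eventually_sequentiallyI[where c=1])
      fix n :: nat assume n: "1 \<le> n"
      have "(\<Sum>i<n. Z i \<omega>) = D n \<omega> + real n * p" by (simp add: D_def Y_def sum_subtractf)
      then show "D n \<omega> / n + p = (\<Sum>i<n. Z i \<omega>) / n" using n by (simp add: field_simps)
    qed
    with lim show "(\<lambda>n. (\<Sum>i<n. Z i \<omega>) / n) \<longlonglongrightarrow> p"
      using tendsto_cong by fastforce
  qed
qed

lemma DP_facts:
  assumes a: "a > 0" and F0: "real_distribution F0"
  shows "prob_space (DP a F0)" "sets (DP a F0) = sets (prob_algebra borel)"
    "space (DP a F0) = space (prob_algebra borel)"
proof -
  have cp: "(\<lambda>(v, \<theta>). sb_measure v \<theta>) = (\<lambda>x. sb_measure (fst x) (snd x))" by auto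
  have eqD: "DP a F0 = distr (PiM UNIV (\<lambda>_::nat. beta1 a) \<Otimes>\<^sub>M PiM UNIV (\<lambda>_::nat. F0)) (prob_algebra borel) (\<lambda>x. sb_measure (fst x) (snd x))"
    unfolding DP_def cp ..
  show "prob_space (DP a F0)"
  proof -
    have U: "UNIV \<in> sets (borel :: real measure)" by simp
    show ?thesis using prob_space.prob_space_distr[OF OM_prob[OF a F0 U] sbm[OF a F0 U]] eqD by simp
  qed
  show "sets (DP a F0) = sets (prob_algebra borel)" unfolding DP_def by simp
  then show "space (DP a F0) = space (prob_algebra borel)" by (rule sets_eq_imp_space_eq)
qed

lemma in_space_prob_algebra: "P \<in> space (prob_algebra borel) \<Longrightarrow> prob_space P \<and> sets P = sets borel"
  by (simp add: space_prob_algebra)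

lemma kd_left_integrable:
  assumes D: "prob_space D" "sets D = sets (prob_algebra borel)" and H: "real_distribution H"
  shows "integrable D (\<lambda>P. kolmogorov_dist P H)"
proof -
  interpret prob_space D by fact
  have sp: "space D = space (prob_algebra borel)" using D(2) by (rule sets_eq_imp_space_eq)
  have Hp: "prob_space H" using H by (simp add: real_distribution_def)
  show ?thesis
  proof (rule integrable_const_bound[where B=1])
    show "AE x in D. norm (kolmogorov_dist x H) \<le> 1"
    proof (rule AE_I2)
      fix x assume "x \<in> space D"
      then have "prob_space x" using sp in_space_prob_algebra by auto
      then show "norm (kolmogorov_dist x H) \<le> 1" using kd_nonneg[OF _ Hp] kd_le1[OF _ Hp] by auto
    qed
    show "(\<lambda>P. kolmogorov_dist P H) \<in> borel_measurable D"
      using kd_measurable_left[OF H] by (simp add: measurable_cong_sets[OF D(2) refl])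
  qed
qed

lemma abs_meas_integrable:
  assumes D: "prob_space D" "sets D = sets (prob_algebra borel)" and S: "S \<in> sets borel"
  shows "integrable D (\<lambda>P. \<bar>measure P S - c\<bar>)"
proof -
  interpret prob_space D by fact
  have sp: "space D = space (prob_algebra borel)" using D(2) by (rule sets_eq_imp_space_eq)
  show ?thesis
  proof (rule integrable_const_bound[where B="1 + \<bar>c\<bar>"])
    show "AE x in D. norm \<bar>measure x S - c\<bar> \<le> 1 + \<bar>c\<bar>"
    proof (rule AE_I2)
      fix x assume "x \<in> space D"
      then have "prob_space x" using sp in_space_prob_algebra by auto
      then have "measure x S \<le> 1" "0 \<le> measure x S" using prob_space.prob_le_1 by auto
      then show "norm \<bar>measure x S - c\<bar> \<le> 1 + \<bar>c\<bar>"
        unfolding real_norm_def abs_abs abs_le_iff using abs_ge_self[of c] abs_ge_minus_self[of c] by linarith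
    qed
    show "(\<lambda>P. \<bar>measure P S - c\<bar>) \<in> borel_measurable D"
      using measurable_measure_prob_algebra[OF S] by (simp add: measurable_cong_sets[OF D(2) refl])
  qed
qed

lemma kd_DP_bound:
  assumes a: "a > 0" and F0: "real_distribution F0" and H: "real_distribution H"
    and fin: "finite \<F>" and sub: "\<F> \<subseteq> sets borel"
    and brk: "\<forall>P. prob_space P \<longrightarrow> sets P = sets borel \<longrightarrow> kolmogorov_dist P H \<le> (\<Sum>S\<in>\<F>. \<bar>measure P S - measure H S\<bar>) + 1 / k"
  shows "(\<integral>P. kolmogorov_dist P H \<partial>DP a F0) \<le> real (card \<F>) * sqrt (1 / (a + 1)) + (\<Sum>S\<in>\<F>. \<bar>measure F0 S - measure H S\<bar>) + 1 / k"
proof -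
  note Df = DP_facts[OF a F0]
  interpret prob_space "DP a F0" by (rule Df(1))
  have ints: "integrable (DP a F0) (\<lambda>P. \<bar>measure P S - measure F0 S\<bar>)" if "S \<in> \<F>" for S
    using abs_meas_integrable[OF Df(1,2)] sub that by auto
  have "(\<integral>P. kolmogorov_dist P H \<partial>DP a F0) \<le> (\<integral>P. (\<Sum>S\<in>\<F>. \<bar>measure P S - measure F0 S\<bar>) + ((\<Sum>S\<in>\<F>. \<bar>measure F0 S - measure H S\<bar>) + 1 / k) \<partial>DP a F0)"
  proof (rule integral_mono)
    show "integrable (DP a F0) (\<lambda>P. kolmogorov_dist P H)" by (rule kd_left_integrable[OF Df(1,2) H])
    show "integrable (DP a F0) (\<lambda>P. (\<Sum>S\<in>\<F>. \<bar>measure P S - measure F0 S\<bar>) + ((\<Sum>S\<in>\<F>. \<bar>measure F0 S - measure H S\<bar>) + 1 / k))"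
      by (intro Bochner_Integration.integrable_add Bochner_Integration.integrable_sum ints integrable_const)
    fix P assume "P \<in> space (DP a F0)"
    then have P: "prob_space P" "sets P = sets borel" using Df(3) in_space_prob_algebra by auto
    have "kolmogorov_dist P H \<le> (\<Sum>S\<in>\<F>. \<bar>measure P S - measure H S\<bar>) + 1 / k" using brk P by blast
    also have "(\<Sum>S\<in>\<F>. \<bar>measure P S - measure H S\<bar>) \<le> (\<Sum>S\<in>\<F>. \<bar>measure P S - measure F0 S\<bar> + \<bar>measure F0 S - measure H S\<bar>)"
      by (rule sum_mono) simp
    finally show "kolmogorov_dist P H \<le> (\<Sum>S\<in>\<F>. \<bar>measure P S - measure F0 S\<bar>) + ((\<Sum>S\<in>\<F>. \<bar>measure F0 S - measure H S\<bar>) + 1 / k)"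
      by (simp add: sum.distrib)
  qed
  also have "\<dots> = (\<Sum>S\<in>\<F>. \<integral>P. \<bar>measure P S - measure F0 S\<bar> \<partial>DP a F0) + ((\<Sum>S\<in>\<F>. \<bar>measure F0 S - measure H S\<bar>) + 1 / k)"
    by (subst Bochner_Integration.integral_add)
       (auto intro!: Bochner_Integration.integrable_sum ints simp: Bochner_Integration.integral_sum[OF ints] prob_space)
  also have "(\<Sum>S\<in>\<F>. \<integral>P. \<bar>measure P S - measure F0 S\<bar> \<partial>DP a F0) \<le> (\<Sum>S\<in>\<F>. sqrt (1 / (a + 1)))"
    by (rule sum_mono) (use sub in \<open>auto intro!: DP_bound[OF a F0]\<close>)
  finally show ?thesis by simp
qed

lemma WIKS_bound:
  assumes D1: "prob_space D1" "sets D1 = sets (prob_algebra borel)"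
    and D2: "prob_space D2" "sets D2 = sets (prob_algebra borel)"
    and H1: "real_distribution H1" and H2: "real_distribution H2"
  shows "\<bar>(\<integral>PQ. kolmogorov_dist (fst PQ) (snd PQ) \<partial>(D1 \<Otimes>\<^sub>M D2)) - kolmogorov_dist H1 H2\<bar>
     \<le> (\<integral>P. kolmogorov_dist P H1 \<partial>D1) + (\<integral>Q. kolmogorov_dist Q H2 \<partial>D2)"
proof -
  interpret p: prob_space "D1 \<Otimes>\<^sub>M D2" by (rule prob_space_pair[OF D1(1) D2(1)])
  have H1p: "prob_space H1" and H2p: "prob_space H2" using H1 H2 by (auto simp: real_distribution_def)
  have sp: "space (D1 \<Otimes>\<^sub>M D2) = space (prob_algebra borel) \<times> space (prob_algebra borel)"
    by (simp add: space_pair_measure sets_eq_imp_space_eq[OF D1(2)] sets_eq_imp_space_eq[OF D2(2)])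
  have se: "sets (D1 \<Otimes>\<^sub>M D2) = sets (prob_algebra borel \<Otimes>\<^sub>M prob_algebra borel)"
    by (rule sets_pair_measure_cong[OF D1(2) D2(2)])
  have i1: "integrable D1 (\<lambda>P. kolmogorov_dist P H1)" by (rule kd_left_integrable[OF D1 H1])
  have i2: "integrable D2 (\<lambda>P. kolmogorov_dist P H2)" by (rule kd_left_integrable[OF D2 H2])
  have c1: "integrable D2 (\<lambda>_. 1::real)" "integrable D1 (\<lambda>_. 1::real)"
    using prob_space.finite_measure[OF D2(1)] prob_space.finite_measure[OF D1(1)] by (auto simp: finite_measure.integrable_const)
  have f1: "integrable (D1 \<Otimes>\<^sub>M D2) (\<lambda>x. kolmogorov_dist (fst x) H1)"
    and f1i: "(\<integral>x. kolmogorov_dist (fst x) H1 \<partial>(D1 \<Otimes>\<^sub>M D2)) = (\<integral>P. kolmogorov_dist P H1 \<partial>D1)"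
    using pair_integral_mult[OF D1(1) D2(1) i1 c1(1)] prob_space.prob_space[OF D2(1)] by simp_all
  have f2: "integrable (D1 \<Otimes>\<^sub>M D2) (\<lambda>x. kolmogorov_dist (snd x) H2)"
    and f2i: "(\<integral>x. kolmogorov_dist (snd x) H2 \<partial>(D1 \<Otimes>\<^sub>M D2)) = (\<integral>Q. kolmogorov_dist Q H2 \<partial>D2)"
    using pair_integral_mult[OF D1(1) D2(1) c1(2) i2] prob_space.prob_space[OF D1(1)] by simp_all
  have km: "(\<lambda>PQ. kolmogorov_dist (fst PQ) (snd PQ)) \<in> borel_measurable (D1 \<Otimes>\<^sub>M D2)"
    using kd_measurable_pair by (simp add: measurable_cong_sets[OF se refl])
  have ik: "integrable (D1 \<Otimes>\<^sub>M D2) (\<lambda>PQ. kolmogorov_dist (fst PQ) (snd PQ))"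
  proof (rule p.integrable_const_bound[where B=1])
    show "AE x in D1 \<Otimes>\<^sub>M D2. norm (kolmogorov_dist (fst x) (snd x)) \<le> 1"
    proof (rule AE_I2)
      fix x assume "x \<in> space (D1 \<Otimes>\<^sub>M D2)"
      then have "prob_space (fst x)" "prob_space (snd x)" using sp by (auto simp: space_prob_algebra)
      then show "norm (kolmogorov_dist (fst x) (snd x)) \<le> 1" using kd_nonneg kd_le1 by auto
    qed
  qed (rule km)
  have "\<bar>(\<integral>PQ. kolmogorov_dist (fst PQ) (snd PQ) \<partial>(D1 \<Otimes>\<^sub>M D2)) - kolmogorov_dist H1 H2\<bar>
      = \<bar>\<integral>PQ. kolmogorov_dist (fst PQ) (snd PQ) - kolmogorov_dist H1 H2 \<partial>(D1 \<Otimes>\<^sub>M D2)\<bar>"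
    using ik p.prob_space by simp
  also have "\<dots> \<le> (\<integral>PQ. \<bar>kolmogorov_dist (fst PQ) (snd PQ) - kolmogorov_dist H1 H2\<bar> \<partial>(D1 \<Otimes>\<^sub>M D2))"
    by (rule integral_abs_bound)
  also have "\<dots> \<le> (\<integral>PQ. kolmogorov_dist (fst PQ) H1 + kolmogorov_dist (snd PQ) H2 \<partial>(D1 \<Otimes>\<^sub>M D2))"
  proof (rule integral_mono)
    show "integrable (D1 \<Otimes>\<^sub>M D2) (\<lambda>PQ. \<bar>kolmogorov_dist (fst PQ) (snd PQ) - kolmogorov_dist H1 H2\<bar>)"
      using ik by auto
    show "integrable (D1 \<Otimes>\<^sub>M D2) (\<lambda>PQ. kolmogorov_dist (fst PQ) H1 + kolmogorov_dist (snd PQ) H2)"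
      using f1 f2 by auto
    fix x assume "x \<in> space (D1 \<Otimes>\<^sub>M D2)"
    then have "prob_space (fst x)" "prob_space (snd x)" using sp by (auto simp: space_prob_algebra)
    then show "\<bar>kolmogorov_dist (fst x) (snd x) - kolmogorov_dist H1 H2\<bar> \<le> kolmogorov_dist (fst x) H1 + kolmogorov_dist (snd x) H2"
      using kd_lip[of "fst x" "snd x" H1 H2] H1p H2p by simp
  qed
  also have "\<dots> = (\<integral>P. kolmogorov_dist P H1 \<partial>D1) + (\<integral>Q. kolmogorov_dist Q H2 \<partial>D2)"
    using f1 f2 f1i f2i by simp
  finally show ?thesis .
qed

lemma post_conv:
  fixes K :: real
  assumes K: "K > 0" and G: "prob_space G" "sets G = sets borel" and S: "S \<in> sets borel"
    and h: "(\<lambda>n. (\<Sum>i<n. indicator S (xs i)) / real n) \<longlonglongrightarrow> c"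
  shows "(\<lambda>n. measure (post_base K G xs n) S) \<longlonglongrightarrow> c"
proof -
  have Kn: "(\<lambda>n. K / (K + real n)) \<longlonglongrightarrow> 0"
    by (intro tendsto_divide_0[OF tendsto_const] filterlim_at_top_imp_at_infinity
        filterlim_tendsto_add_at_top[OF tendsto_const filterlim_real_sequentially])
  have KGn: "(\<lambda>n. K * measure G S / (K + real n)) \<longlonglongrightarrow> 0"
    by (intro tendsto_divide_0[OF tendsto_const] filterlim_at_top_imp_at_infinity
        filterlim_tendsto_add_at_top[OF tendsto_const filterlim_real_sequentially])
  have eq: "measure (post_base K G xs n) S = K * measure G S / (K + real n) + (1 - K / (K + real n)) * ((\<Sum>i<n. indicator S (xs i)) / real n)" for n
  proof (cases "n = 0")
    case True then show ?thesis using K by (simp add: post_base_measure[OF K G S])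
  next
    case False
    have "K + real n > 0" using K by simp
    then have "1 - K / (K + real n) = real n / (K + real n)" by (simp add: field_simps)
    then show ?thesis using False K by (simp add: post_base_measure[OF K G S] add_divide_distrib)
  qed
  have "(\<lambda>n. K * measure G S / (K + real n) + (1 - K / (K + real n)) * ((\<Sum>i<n. indicator S (xs i)) / real n)) \<longlonglongrightarrow> 0 + (1 - 0) * c"
    by (intro tendsto_add tendsto_mult tendsto_diff KGn Kn h tendsto_const)
  then show ?thesis unfolding eq by simp
qed

lemma A_to_0:
  fixes K :: real
  assumes K: "K > 0" and G: "prob_space G" "sets G = sets borel" and H: "real_distribution H"
    and F: "\<And>k. finite (F k) \<and> F k \<subseteq> sets borel \<and>
       (\<forall>P. prob_space P \<longrightarrow> sets P = sets borel \<longrightarrow> kolmogorov_dist P H \<le> (\<Sum>S\<in>F k. \<bar>measure P S - measure H S\<bar>) + 1 / real (Suc k))"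
    and h: "\<And>k S. S \<in> F k \<Longrightarrow> (\<lambda>n. (\<Sum>i<n. indicator S (xs i)) / real n) \<longlonglongrightarrow> measure H S"
  shows "(\<lambda>n. \<integral>P. kolmogorov_dist P H \<partial>DP (K + real n) (post_base K G xs n)) \<longlonglongrightarrow> 0"
proof (rule LIMSEQ_I)
  fix e :: real assume e: "0 < e"
  obtain k :: nat where k: "2 / e < real k" using reals_Archimedean2 by blast
  have k': "1 / real (Suc k) < e / 2"
  proof -
    have "2 < e * real (Suc k)" using k e by (simp add: field_simps)
    then show ?thesis using e by (simp add: field_simps)
  qed
  define T where "T n = real (card (F k)) * sqrt (1 / (K + real n + 1)) + (\<Sum>S\<in>F k. \<bar>measure (post_base K G xs n) S - measure H S\<bar>)" for n
  have Tl: "T \<longlonglongrightarrow> 0"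
  proof -
    have s: "(\<lambda>n. sqrt (1 / (K + real n + 1))) \<longlonglongrightarrow> 0"
    proof -
      have "(\<lambda>n. 1 / (K + 1 + real n)) \<longlonglongrightarrow> 0"
        by (intro tendsto_divide_0[OF tendsto_const] filterlim_at_top_imp_at_infinity
            filterlim_tendsto_add_at_top[OF tendsto_const filterlim_real_sequentially])
      then have "(\<lambda>n. 1 / (K + real n + 1)) \<longlonglongrightarrow> 0" by (simp add: algebra_simps)
      from tendsto_real_sqrt[OF this] show ?thesis by simp
    qed
    have "(\<lambda>n. \<Sum>S\<in>F k. \<bar>measure (post_base K G xs n) S - measure H S\<bar>) \<longlonglongrightarrow> (\<Sum>S\<in>F k. \<bar>measure H S - measure H S\<bar>)"
    proof (intro tendsto_sum tendsto_rabs tendsto_diff tendsto_const)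
      fix S assume S: "S \<in> F k"
      then have Sb: "S \<in> sets borel" using F[of k] by auto
      show "(\<lambda>n. measure (post_base K G xs n) S) \<longlonglongrightarrow> measure H S"
        by (rule post_conv[OF K G Sb h[OF S]])
    qed
    then have "(\<lambda>n. \<Sum>S\<in>F k. \<bar>measure (post_base K G xs n) S - measure H S\<bar>) \<longlonglongrightarrow> 0" by simp
    from tendsto_add[OF tendsto_mult[OF tendsto_const s] this] show ?thesis unfolding T_def by simp
  qed
  then have "eventually (\<lambda>n. T n < e / 2) sequentially"
    using e by (intro order_tendstoD(2)) auto
  then obtain N where N: "\<And>n. n \<ge> N \<Longrightarrow> T n < e / 2" by (auto simp: eventually_sequentially)
  show "\<exists>no. \<forall>n\<ge>no. norm ((\<integral>P. kolmogorov_dist P H \<partial>DP (K + real n) (post_base K G xs n)) - 0) < e"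
  proof (intro exI allI impI)
    fix n assume n: "N \<le> n"
    have a: "K + real n > 0" using K by simp
    have rd: "real_distribution (post_base K G xs n)" by (rule post_base_real_distribution[OF K G])
    have Df: "prob_space (DP (K + real n) (post_base K G xs n))" "space (DP (K + real n) (post_base K G xs n)) = space (prob_algebra borel)"
      using DP_facts[OF a rd] by auto
    have Hp: "prob_space H" using H by (simp add: real_distribution_def)
    have ub: "(\<integral>P. kolmogorov_dist P H \<partial>DP (K + real n) (post_base K G xs n)) \<le> T n + 1 / real (Suc k)"
      using kd_DP_bound[OF a rd H, of "F k" "Suc k"] F[of k] by (simp add: T_def add.assoc)
    have lb: "0 \<le> (\<integral>P. kolmogorov_dist P H \<partial>DP (K + real n) (post_base K G xs n))"
      by (rule integral_nonneg_AE, rule AE_I2) (use Df(2) Hp in \<open>auto intro!: kd_nonneg simp: space_prob_algebra\<close>)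
    show "norm ((\<integral>P. kolmogorov_dist P H \<partial>DP (K + real n) (post_base K G xs n)) - 0) < e"
      using ub lb N[OF n] k' by simp
  qed
qed

lemma main_det:
  fixes K :: real
  assumes K: "K > 0" and G: "prob_space G" "sets G = sets borel"
    and H1: "real_distribution H1" and H2: "real_distribution H2"
    and F1: "\<And>k. finite (F1 k) \<and> F1 k \<subseteq> sets borel \<and>
       (\<forall>P. prob_space P \<longrightarrow> sets P = sets borel \<longrightarrow> kolmogorov_dist P H1 \<le> (\<Sum>S\<in>F1 k. \<bar>measure P S - measure H1 S\<bar>) + 1 / real (Suc k))"
    and F2: "\<And>k. finite (F2 k) \<and> F2 k \<subseteq> sets borel \<and>
       (\<forall>P. prob_space P \<longrightarrow> sets P = sets borel \<longrightarrow> kolmogorov_dist P H2 \<le> (\<Sum>S\<in>F2 k. \<bar>measure P S - measure H2 S\<bar>) + 1 / real (Suc k))"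
    and h1: "\<And>k S. S \<in> F1 k \<Longrightarrow> (\<lambda>n. (\<Sum>i<n. indicator S (xs i)) / real n) \<longlonglongrightarrow> measure H1 S"
    and h2: "\<And>k S. S \<in> F2 k \<Longrightarrow> (\<lambda>n. (\<Sum>i<n. indicator S (ys i)) / real n) \<longlonglongrightarrow> measure H2 S"
  shows "((\<lambda>(n, m). WIKS K G xs ys n m) \<longlongrightarrow> kolmogorov_dist H1 H2) (sequentially \<times>\<^sub>F sequentially)"
proof -
  define A where "A n = (\<integral>P. kolmogorov_dist P H1 \<partial>DP (K + real n) (post_base K G xs n))" for n
  define B where "B m = (\<integral>Q. kolmogorov_dist Q H2 \<partial>DP (K + real m) (post_base K G ys m))" for m
  have Al: "A \<longlonglongrightarrow> 0" unfolding A_def by (rule A_to_0[OF K G H1 F1 h1])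
  have Bl: "B \<longlonglongrightarrow> 0" unfolding B_def by (rule A_to_0[OF K G H2 F2 h2])
  have bound: "\<bar>WIKS K G xs ys n m - kolmogorov_dist H1 H2\<bar> \<le> A n + B m" for n m
  proof -
    have a: "K + real n > 0" "K + real m > 0" using K by auto
    have rd: "real_distribution (post_base K G xs n)" "real_distribution (post_base K G ys m)"
      by (rule post_base_real_distribution[OF K G])+
    show ?thesis unfolding WIKS_def A_def B_def
      by (rule WIKS_bound[OF DP_facts(1,2)[OF a(1) rd(1)] DP_facts(1,2)[OF a(2) rd(2)] H1 H2])
  qed
  show ?thesis
    unfolding tendsto_iff
  proof (intro allI impI)
    fix e :: real assume e: "0 < e"
    have e2: "0 < e / 2" using e by simp
    have "eventually (\<lambda>n. dist (A n) 0 < e / 2) sequentially"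
      by (rule tendstoD[OF Al e2])
    moreover have "eventually (\<lambda>m. dist (B m) 0 < e / 2) sequentially"
      by (rule tendstoD[OF Bl e2])
    ultimately show "eventually (\<lambda>x. dist (case x of (n, m) \<Rightarrow> WIKS K G xs ys n m) (kolmogorov_dist H1 H2) < e) (sequentially \<times>\<^sub>F sequentially)"
      unfolding eventually_prod_filter
    proof (intro exI conjI allI impI)
      fix n m assume "dist (A n) 0 < e / 2" "dist (B m) 0 < e / 2"
      then show "dist (case (n, m) of (n, m) \<Rightarrow> WIKS K G xs ys n m) (kolmogorov_dist H1 H2) < e"
        using bound[of n m] by (simp add: dist_real_def)
    qed
  qed
qed

lemma iid_slln:
  assumes M: "prob_space M" and ind: "prob_space.indep_vars M (\<lambda>_. borel) V UNIV" and inj: "inj f"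
    and dist: "\<And>i. distr M borel (V (f i)) = \<mu>" and S: "S \<in> sets borel"
  shows "AE \<omega> in M. (\<lambda>n. (\<Sum>i<n. indicator S (V (f i) \<omega>)) / real n) \<longlonglongrightarrow> measure \<mu> S"
proof -
  interpret prob_space M by fact
  have rv[measurable]: "V k \<in> borel_measurable M" for k using ind unfolding indep_vars_def by auto
  have mup: "prob_space \<mu>" using prob_space_distr[OF rv[of "f 0"]] dist[of 0] by simp
  define p where "p = measure \<mu> S"
  have p: "0 \<le> p" "p \<le> 1" unfolding p_def using prob_space.prob_le_1[OF mup] by auto
  have sets_mu: "sets \<mu> = sets borel" using dist[of 0] by (metis sets_distr)
  have mean: "(\<integral>\<omega>. indicator S (V (f i) \<omega>) - p \<partial>M) = 0" for i
  proof -
    have "(\<integral>\<omega>. indicator S (V (f i) \<omega>) - p \<partial>M) = (\<integral>x. indicator S x - p \<partial>distr M borel (V (f i)))"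
      by (rule integral_distr[symmetric]) (use S in auto)
    also have "\<dots> = (\<integral>x. indicator S x - p \<partial>\<mu>)" unfolding dist ..
    also have "\<dots> = measure \<mu> S - p"
      using S sets_mu prob_space.prob_space[OF mup] prob_space.finite_measure[OF mup]
        finite_measure.integrable_const[OF prob_space.finite_measure[OF mup], of p]
      by (subst Bochner_Integration.integral_diff) (auto simp: finite_measure.emeasure_finite less_top[symmetric])
    finally show ?thesis by (simp add: p_def)
  qed
  show ?thesis unfolding p_def[symmetric]
  proof (rule slln01[OF M])
    fix i show "(\<lambda>\<omega>. indicator S (V (f i) \<omega>)) \<in> borel_measurable M" using S by measurable
  next
    fix i \<omega> show "0 \<le> (indicator S (V (f i) \<omega>) :: real) \<and> (indicator S (V (f i) \<omega>) :: real) \<le> 1"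
      by (auto simp: indicator_def)
  next
    show "0 \<le> p" "p \<le> 1" by (rule p)+
  next
    fix i j :: nat assume ij: "i \<noteq> j"
    then have fij: "f i \<noteq> f j" using inj by (auto dest: injD)
    define W where "W k \<omega> = indicator S (V k \<omega>) - p" for k \<omega>
    have ind2: "indep_vars (\<lambda>_. borel) W {f i, f j}"
      unfolding W_def
      by (rule indep_vars_compose2[where X=V and Y="\<lambda>_ x. indicator S x - p", OF indep_vars_subset[OF ind]])
         (use S in auto)
    have iW: "integrable M (W k)" for k
      unfolding W_def
      by (rule integrable_const_bound[where B="1 + \<bar>p\<bar>"]) (use S in \<open>auto simp: indicator_def\<close>)
    have "(\<integral>\<omega>. (\<Prod>k\<in>{f i, f j}. W k \<omega>) \<partial>M) = (\<Prod>k\<in>{f i, f j}. \<integral>\<omega>. W k \<omega> \<partial>M)"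
      by (rule indep_vars_lebesgue_integral[OF _ ind2 iW]) simp
    then show "(\<integral>\<omega>. (indicator S (V (f i) \<omega>) - p) * (indicator S (V (f j) \<omega>) - p) \<partial>M) = 0"
      using fij mean[of i] mean[of j] by (simp add: W_def)
  qed
qed

theorem corollary2:
  fixes M :: "'a measure" and K C :: real and G :: "real measure"
    and X Y :: "nat \<Rightarrow> 'a \<Rightarrow> real" and HX HY :: "real \<Rightarrow> real"
  assumes "K > 0"
    and "prob_space G" and "sets G = sets borel"
    and "C > 0"
    and "\<exists>\<nu> f. sets \<nu> = sets borel \<and> f \<in> borel_measurable \<nu> \<and> G = density \<nu> f
                \<and> (\<forall>x. f x \<le> ennreal C)"
    and "prob_space M"
    and "prob_space.indep_vars M (\<lambda>_. borel)
           (\<lambda>i. case i of Inl j \<Rightarrow> X j | Inr j \<Rightarrow> Y j) (UNIV :: (nat + nat) set)"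
    and "\<And>i. cdf (distr M borel (X i)) = HX"
    and "\<And>j. cdf (distr M borel (Y j)) = HY"
  shows "AE \<omega> in M. ((\<lambda>(n, m). WIKS K G (\<lambda>i. X i \<omega>) (\<lambda>j. Y j \<omega>) n m)
            \<longlongrightarrow> (SUP x. \<bar>HX x - HY x\<bar>)) (sequentially \<times>\<^sub>F sequentially)"
proof -
  note K = assms(1) and G = assms(2,3)
  interpret prob_space M by (rule assms(6))
  define V where "V = (\<lambda>i. case i of Inl j \<Rightarrow> X j | Inr j \<Rightarrow> Y j)"
  have ind: "indep_vars (\<lambda>_. borel) V (UNIV :: (nat + nat) set)" using assms(7) unfolding V_def .
  have rv: "random_variable borel (V k)" for k using ind unfolding indep_vars_def by auto
  have XV: "X j = V (Inl j)" "Y j = V (Inr j)" for j by (simp_all add: V_def)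
  have Xm: "random_variable borel (X j)" and Ym: "random_variable borel (Y j)" for j
    using rv XV by metis+
  define HXd where "HXd = distr M borel (X 0)"
  define HYd where "HYd = distr M borel (Y 0)"
  have rdX: "real_distribution HXd" unfolding HXd_def by (rule real_distribution_distr[OF Xm])
  have rdY: "real_distribution HYd" unfolding HYd_def by (rule real_distribution_distr[OF Ym])
  have dX: "distr M borel (V (Inl j)) = HXd" for j
    unfolding XV[symmetric] HXd_def
    by (rule cdf_unique[OF real_distribution_distr[OF Xm] real_distribution_distr[OF Xm]]) (simp add: assms(8))
  have dY: "distr M borel (V (Inr j)) = HYd" for j
    unfolding XV[symmetric] HYd_def
    by (rule cdf_unique[OF real_distribution_distr[OF Ym] real_distribution_distr[OF Ym]]) (simp add: assms(9))
  have L: "(SUP x. \<bar>HX x - HY x\<bar>) = kolmogorov_dist HXd HYd"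
    unfolding kolmogorov_dist_def HXd_def HYd_def assms(8)[of 0, symmetric] assms(9)[of 0, symmetric] cdf_def ..
  have "\<forall>k. \<exists>F. finite F \<and> F \<subseteq> sets borel \<and>
       (\<forall>P. prob_space P \<longrightarrow> sets P = sets borel \<longrightarrow> kolmogorov_dist P HXd \<le> (\<Sum>S\<in>F. \<bar>measure P S - measure HXd S\<bar>) + 1 / real (Suc k))"
    using bracketing[OF rdX] by (metis zero_less_Suc)
  then obtain F1 where F1: "\<And>k. finite (F1 k) \<and> F1 k \<subseteq> sets borel \<and>
       (\<forall>P. prob_space P \<longrightarrow> sets P = sets borel \<longrightarrow> kolmogorov_dist P HXd \<le> (\<Sum>S\<in>F1 k. \<bar>measure P S - measure HXd S\<bar>) + 1 / real (Suc k))"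
    by metis
  have "\<forall>k. \<exists>F. finite F \<and> F \<subseteq> sets borel \<and>
       (\<forall>P. prob_space P \<longrightarrow> sets P = sets borel \<longrightarrow> kolmogorov_dist P HYd \<le> (\<Sum>S\<in>F. \<bar>measure P S - measure HYd S\<bar>) + 1 / real (Suc k))"
    using bracketing[OF rdY] by (metis zero_less_Suc)
  then obtain F2 where F2: "\<And>k. finite (F2 k) \<and> F2 k \<subseteq> sets borel \<and>
       (\<forall>P. prob_space P \<longrightarrow> sets P = sets borel \<longrightarrow> kolmogorov_dist P HYd \<le> (\<Sum>S\<in>F2 k. \<bar>measure P S - measure HYd S\<bar>) + 1 / real (Suc k))"
    by metis
  have injl: "inj (Inl :: nat \<Rightarrow> nat + nat)" and injr: "inj (Inr :: nat \<Rightarrow> nat + nat)" by (auto intro: injI)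
  have aeX: "AE \<omega> in M. \<forall>k. \<forall>S\<in>F1 k. (\<lambda>n. (\<Sum>i<n. indicator S (X i \<omega>)) / real n) \<longlonglongrightarrow> measure HXd S"
    unfolding AE_all_countable
  proof
    fix k show "AE \<omega> in M. \<forall>S\<in>F1 k. (\<lambda>n. (\<Sum>i<n. indicator S (X i \<omega>)) / real n) \<longlonglongrightarrow> measure HXd S"
    proof (rule AE_finite_allI)
      show "finite (F1 k)" using F1 by blast
      fix S assume "S \<in> F1 k"
      then have S: "S \<in> sets borel" using F1 by blast
      show "AE \<omega> in M. (\<lambda>n. (\<Sum>i<n. indicator S (X i \<omega>)) / real n) \<longlonglongrightarrow> measure HXd S"
        using iid_slln[OF assms(6) ind injl dX S] by (simp add: V_def)
    qed
  qed
  have aeY: "AE \<omega> in M. \<forall>k. \<forall>S\<in>F2 k. (\<lambda>n. (\<Sum>i<n. indicator S (Y i \<omega>)) / real n) \<longlonglongrightarrow> measure HYd S"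
    unfolding AE_all_countable
  proof
    fix k show "AE \<omega> in M. \<forall>S\<in>F2 k. (\<lambda>n. (\<Sum>i<n. indicator S (Y i \<omega>)) / real n) \<longlonglongrightarrow> measure HYd S"
    proof (rule AE_finite_allI)
      show "finite (F2 k)" using F2 by blast
      fix S assume "S \<in> F2 k"
      then have S: "S \<in> sets borel" using F2 by blast
      show "AE \<omega> in M. (\<lambda>n. (\<Sum>i<n. indicator S (Y i \<omega>)) / real n) \<longlonglongrightarrow> measure HYd S"
        using iid_slln[OF assms(6) ind injr dY S] by (simp add: V_def)
    qed
  qed
  show ?thesis
    using aeX aeY
  proof eventually_elim
    case (elim \<omega>)
    show ?case unfolding L
      by (rule main_det[OF K G rdX rdY F1 F2]) (use elim in auto)
  qed
qed

end
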